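(* Let $P$ be a program, $SQ$ a stack-queue scheduling rule and $G$ a p-goal. If there is a finite p-RSLD derivation $G\xrightarrow{SQ,X.P}>>Q$ of $G$ in $P$ via $SQ$ with template $X$ and final reduced resolvent $Q$, then there exist a template $Z$ and a p-SLD derivation $G\xrightarrow{SQ,Z.P}R$ with $X\subseteq_L Z$ and $\#Q\le\#R$.
   Context: A p-atom is a pair $a[p]$ of an atom $a$ and a rational priority $p$. A p-goal is a finite set of p-atoms with pairwise distinct priorities, regarded as a list ordered by increasing priority; $\#G$ is its number of p-atoms. Substitutions act on atoms and leave priorities unchanged. A clause is $h\leftarrow B$ with $h$ an atom and $B$ a p-goal; a program is a finite set of clauses. For p-goals with no common priority, $F+G=F\cup G$; $F|G$ denotes $F+G$ when all priorities of $F$ are smaller than those of $G$. A shifting $\underline{\pi}$ is a strictly increasing bijection $\mathbb{Q}\to\mathbb{Q}$ acting on priorities. Priority derivation step: for a p-goal $a|F$ ($a$ of least priority), clause $c=(h\leftarrow B)$, renaming $\xi$ with $var(a|F)\cap var(c\xi)=\emptyset$, idempotent relevant mgu $\theta$ of $a$ and $h\xi$, shifting $\underline{\pi}$ with $F$, $B\xi\underline{\pi}$ sharing no priority: $a|F\xrightarrow{c\xi,\theta}(F+B\xi\underline{\pi})\theta$. A p-SLD derivation is a sequence of such steps with each renamed clause $c_j\xi_j$ variable-disjoint from the initial goal and all earlier renamed clauses; its template is the sequence of applied clauses. For templates, $X\subseteq_L Y$ means $X$ is a subsequence of $Y$. $G\xrightarrow{S,M.P}R$ denotes a p-SLD derivation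 with template $M$, clauses in $P$, steps in $S$. Lowering: for $c=(h\leftarrow B)$, a step $a\lambda\underline{\sigma}|(K\lambda\underline{\sigma}+X)\xrightarrow{c}(X+K\lambda\underline{\sigma}+B\xi''\underline{\theta}'')\alpha''$ is a lowering by $X$ of $a|K\xrightarrow{c}(K+B\xi'\underline{\theta}')\alpha'$; a congruent lowering if some shifting $\underline{\rho}$ has $K\underline{\rho}=K\underline{\sigma}$ and $B\underline{\theta}'\underline{\rho}=B\underline{\theta}''$. Steps are congruent lowerings of each other if each is a congruent lowering of the other. A set $S$ of steps is complete if (i) whenever some step $G\xrightarrow{c}\cdot$ exists, some step $G\xrightarrow{c}\cdot$ lies in $S$, and (ii) $S$ contains every step that is a congruent lowering of each other with a step of $S$. Stack-queue scheduling rule: a complete set $SQ$ of steps such that for every clause $c=(h\leftarrow B)$ there are p-goals $M_s,M_q$ with $B=M_s|M_q$ such that every step $a|K\xrightarrow{c\xi,\mu}R$ in $SQ$ satisfies $R=(M_s\xi\underline{\gamma}|K|M_q\xi\underline{\gamma})\mu$ for some shifting $\underline{\gamma}$. Priority reduced goal: for a set of variables $X$, substitution $\tau$ and p-goal $G$, $N$ is a reduced p-goal of $G$ by $\tau$ up to $X$, written $G>>^{\tau}N$, if (i) $G=F+\{a_1[p_1],\dots,a_h[p_h]\}+A_1+\dots+A_h$ where $F,A_1,\dots,A_h$ are p-goals and $b\tau=a_j$ for every $b[s]\in A_j$; (ii) $N=F+\{a_1[r_1],\dots,a_h[r_h]\}$ with $r_j=\min(\{p_j\}\cup\{\text{priorities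 of }A_j\})$; (iii) $x\tau=x$ for all $x\in X\cup var(N)$. p-RSLD derivation of $G_0$ in $P$: a sequence $G_0>>^{\alpha_0}N_0\xrightarrow{c_0\xi_0,\theta_0}G_1>>^{\alpha_1}N_1\xrightarrow{c_1\xi_1,\theta_1}\cdots$ where each $N_j\xrightarrow{c_j\xi_j,\theta_j}G_{j+1}$ is a priority derivation step with $c_j\in P$ and $var(c_j\xi_j)\cap(var(G_0)\cup var(c_0\xi_0)\cup\dots\cup var(c_{j-1}\xi_{j-1}))=\emptyset$, and $G_j>>^{\alpha_j}N_j$ up to $var(G_0\theta_0\cdots\theta_{j-1})$. It is via $S$ if all its derivation steps belong to $S$; $G\xrightarrow{S,D.P}>>N$ denotes a finite such derivation with template $D$ whose last element is the reduced resolvent $N$. *)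

theory Defs
  imports Complex_Main "HOL-Library.Sublist"
begin

datatype (funs_trm: 'f, vars_trm: 'v) trm = Var 'v | Fn 'f "('f,'v) trm list"

datatype ('f,'v) atom = Atom 'f "('f,'v) trm list"

type_synonym ('f,'v) subst = "'v \<Rightarrow> ('f,'v) trm"

fun subst_trm :: "('f,'v) subst \<Rightarrow> ('f,'v) trm \<Rightarrow> ('f,'v) trm" where
  "subst_trm \<sigma> (Var x) = \<sigma> x"
| "subst_trm \<sigma> (Fn f ts) = Fn f (map (subst_trm \<sigma>) ts)"

fun subst_atom :: "('f,'v) subst \<Rightarrow> ('f,'v) atom \<Rightarrow> ('f,'v) atom" where
  "subst_atom \<sigma> (Atom p ts) = Atom p (map (subst_trm \<sigma>) ts)"

fun vars_atom :: "('f,'v) atom \<Rightarrow> 'v set" where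
  "vars_atom (Atom p ts) = (\<Union>t\<in>set ts. vars_trm t)"

definition renaming :: "('f,'v) subst \<Rightarrow> bool" where
  "renaming \<xi> \<longleftrightarrow> (\<exists>\<pi>. bij \<pi> \<and> \<xi> = (\<lambda>x. Var (\<pi> x)))"

definition unifier :: "('f,'v) subst \<Rightarrow> ('f,'v) atom \<Rightarrow> ('f,'v) atom \<Rightarrow> bool" where
  "unifier \<theta> a b \<longleftrightarrow> subst_atom \<theta> a = subst_atom \<theta> b"

definition is_mgu :: "('f,'v) subst \<Rightarrow> ('f,'v) atom \<Rightarrow> ('f,'v) atom \<Rightarrow> bool" where
  "is_mgu \<theta> a b \<longleftrightarrow> unifier \<theta> a b \<and>
     (\<forall>\<sigma>. unifier \<sigma> a b \<longrightarrow> (\<exists>\<delta>. \<forall>x. \<sigma> x = subst_trm \<delta> (\<theta> x)))"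

definition idempotent :: "('f,'v) subst \<Rightarrow> bool" where
  "idempotent \<theta> \<longleftrightarrow> (\<forall>x. subst_trm \<theta> (\<theta> x) = \<theta> x)"

definition subst_vars :: "('f,'v) subst \<Rightarrow> 'v set" where
  "subst_vars \<theta> = {x. \<theta> x \<noteq> Var x} \<union> (\<Union>x\<in>{x. \<theta> x \<noteq> Var x}. vars_trm (\<theta> x))"

definition relevant :: "('f,'v) subst \<Rightarrow> ('f,'v) atom \<Rightarrow> ('f,'v) atom \<Rightarrow> bool" where
  "relevant \<theta> a b \<longleftrightarrow> subst_vars \<theta> \<subseteq> vars_atom a \<union> vars_atom b"

type_synonym ('f,'v) pgoal = "(('f,'v) atom \<times> rat) set"
type_synonym ('f,'v) clause = "('f,'v) atom \<times> ('f,'v) pgoal"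

definition prios :: "('f,'v) pgoal \<Rightarrow> rat set" where
  "prios G = snd ` G"

definition pgoal :: "('f,'v) pgoal \<Rightarrow> bool" where
  "pgoal G \<longleftrightarrow> finite G \<and> inj_on snd G"

definition subst_pg :: "('f,'v) subst \<Rightarrow> ('f,'v) pgoal \<Rightarrow> ('f,'v) pgoal" where
  "subst_pg \<sigma> G = (\<lambda>(a,p). (subst_atom \<sigma> a, p)) ` G"

definition shift_pg :: "(rat \<Rightarrow> rat) \<Rightarrow> ('f,'v) pgoal \<Rightarrow> ('f,'v) pgoal" where
  "shift_pg \<pi> G = (\<lambda>(a,p). (a, \<pi> p)) ` G"

definition vars_pg :: "('f,'v) pgoal \<Rightarrow> 'v set" where
  "vars_pg G = (\<Union>ap\<in>G. vars_atom (fst ap))"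

definition shifting :: "(rat \<Rightarrow> rat) \<Rightarrow> bool" where
  "shifting \<pi> \<longleftrightarrow> strict_mono \<pi> \<and> bij \<pi>"

text \<open>all priorities of A are smaller than those of B (the side condition of A|B)\<close>
definition below :: "('f,'v) pgoal \<Rightarrow> ('f,'v) pgoal \<Rightarrow> bool" where
  "below A B \<longleftrightarrow> (\<forall>p\<in>prios A. \<forall>q\<in>prios B. p < q)"

definition valid_clause :: "('f,'v) clause \<Rightarrow> bool" where
  "valid_clause c \<longleftrightarrow> pgoal (snd c)"

definition program :: "('f,'v) clause set \<Rightarrow> bool" where
  "program P \<longleftrightarrow> finite P \<and> (\<forall>c\<in>P. valid_clause c)"

definition subst_clause :: "('f,'v) subst \<Rightarrow> ('f,'v) clause \<Rightarrow> ('f,'v) clause" where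
  "subst_clause \<xi> c = (subst_atom \<xi> (fst c), subst_pg \<xi> (snd c))"

definition vars_clause :: "('f,'v) clause \<Rightarrow> 'v set" where
  "vars_clause c = vars_atom (fst c) \<union> vars_pg (snd c)"

text \<open>G = a[p] | K, i.e. a[p] is the p-atom of least priority of G and K the rest.\<close>
definition first_split :: "('f,'v) pgoal \<Rightarrow> ('f,'v) atom \<Rightarrow> rat \<Rightarrow> ('f,'v) pgoal \<Rightarrow> bool" where
  "first_split G a p K \<longleftrightarrow> G = insert (a,p) K \<and> (a,p) \<notin> K \<and> (\<forall>q\<in>prios K. p < q)"

text \<open>pstep G c xi theta pi R: the priority derivation step
  G = a|F --c xi, theta--> (F + B xi pi) theta, using shifting pi.\<close>
definition pstep :: "('f,'v) pgoal \<Rightarrow> ('f,'v) clause \<Rightarrow> ('f,'v) subst \<Rightarrow> ('f,'v) subst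
     \<Rightarrow> (rat \<Rightarrow> rat) \<Rightarrow> ('f,'v) pgoal \<Rightarrow> bool" where
  "pstep G c \<xi> \<theta> \<pi> R \<longleftrightarrow> pgoal G \<and> valid_clause c \<and>
     (\<exists>a p F. first_split G a p F \<and> renaming \<xi> \<and>
        vars_pg G \<inter> vars_clause (subst_clause \<xi> c) = {} \<and>
        is_mgu \<theta> a (subst_atom \<xi> (fst c)) \<and> idempotent \<theta> \<and>
        relevant \<theta> a (subst_atom \<xi> (fst c)) \<and>
        shifting \<pi> \<and> prios F \<inter> prios (shift_pg \<pi> (subst_pg \<xi> (snd c))) = {} \<and>
        R = subst_pg \<theta> (F \<union> shift_pg \<pi> (subst_pg \<xi> (snd c))))"

type_synonym ('f,'v) step =
  "('f,'v) pgoal \<times> ('f,'v) clause \<times> ('f,'v) subst \<times> ('f,'v) subst \<times> ('f,'v) pgoal"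

fun is_step :: "('f,'v) step \<Rightarrow> bool" where
  "is_step (G, c, \<xi>, \<theta>, R) \<longleftrightarrow> (\<exists>\<pi>. pstep G c \<xi> \<theta> \<pi> R)"

fun cong_lowering :: "('f,'v) step \<Rightarrow> ('f,'v) step \<Rightarrow> bool" where
  "cong_lowering (G2, c2, \<xi>2, \<alpha>2, R2) (G1, c1, \<xi>1, \<alpha>1, R1) \<longleftrightarrow> c1 = c2 \<and>
     (\<exists>a p K lam \<sigma> X \<pi>1 \<pi>2 \<rho>.
        first_split G1 a p K \<and>
        shifting \<sigma> \<and> pgoal X \<and> prios X \<inter> prios (shift_pg \<sigma> (subst_pg lam K)) = {} \<and>
        (\<forall>q\<in>prios X. \<sigma> p < q) \<and>
        G2 = insert (subst_atom lam a, \<sigma> p) (shift_pg \<sigma> (subst_pg lam K) \<union> X) \<and>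
        pstep G1 c1 \<xi>1 \<alpha>1 \<pi>1 R1 \<and> pstep G2 c2 \<xi>2 \<alpha>2 \<pi>2 R2 \<and>
        shifting \<rho> \<and> shift_pg \<rho> K = shift_pg \<sigma> K \<and>
        shift_pg \<rho> (shift_pg \<pi>1 (snd c1)) = shift_pg \<pi>2 (snd c1))"

definition complete_steps :: "('f,'v) step set \<Rightarrow> bool" where
  "complete_steps S \<longleftrightarrow> (\<forall>s\<in>S. is_step s) \<and>
     (\<forall>G c. (\<exists>\<xi> \<theta> R. is_step (G, c, \<xi>, \<theta>, R)) \<longrightarrow> (\<exists>\<xi> \<theta> R. (G, c, \<xi>, \<theta>, R) \<in> S)) \<and>
     (\<forall>s\<in>S. \<forall>s'. cong_lowering s s' \<and> cong_lowering s' s \<longrightarrow> s' \<in> S)"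

definition stack_queue :: "('f,'v) step set \<Rightarrow> bool" where
  "stack_queue SQ \<longleftrightarrow> complete_steps SQ \<and>
     (\<forall>h B. valid_clause (h, B) \<longrightarrow>
        (\<exists>Ms Mq. pgoal Ms \<and> pgoal Mq \<and> below Ms Mq \<and> B = Ms \<union> Mq \<and>
           (\<forall>G \<xi> \<mu> R. (G, (h, B), \<xi>, \<mu>, R) \<in> SQ \<longrightarrow>
              (\<forall>a p K. first_split G a p K \<longrightarrow>
                 (\<exists>\<gamma>. shifting \<gamma> \<and>
                    below (shift_pg \<gamma> (subst_pg \<xi> Ms)) K \<and>
                    below K (shift_pg \<gamma> (subst_pg \<xi> Mq)) \<and>
                    below (shift_pg \<gamma> (subst_pg \<xi> Ms)) (shift_pg \<gamma> (subst_pg \<xi> Mq)) \<and>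
                    R = subst_pg \<mu> (shift_pg \<gamma> (subst_pg \<xi> Ms) \<union> K \<union>
                                     shift_pg \<gamma> (subst_pg \<xi> Mq)))))))"

text \<open>reduced X tau G N : G >>^tau N up to X\<close>
definition reduced :: "'v set \<Rightarrow> ('f,'v) subst \<Rightarrow> ('f,'v) pgoal \<Rightarrow> ('f,'v) pgoal \<Rightarrow> bool" where
  "reduced X \<tau> G N \<longleftrightarrow> pgoal G \<and>
     (\<exists>F (h::nat) a p A.
        pgoal F \<and> (\<forall>j<h. pgoal (A j)) \<and> inj_on p {..<h} \<and>
        prios F \<inter> p ` {..<h} = {} \<and>
        (\<forall>j<h. prios F \<inter> prios (A j) = {}) \<and>
        (\<forall>j<h. \<forall>k<h. p j \<notin> prios (A k)) \<and>
        (\<forall>j<h. \<forall>k<h. j \<noteq> k \<longrightarrow> prios (A j) \<inter> prios (A k) = {}) \<and>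
        G = F \<union> (\<lambda>j. (a j, p j)) ` {..<h} \<union> (\<Union>j<h. A j) \<and>
        (\<forall>j<h. \<forall>bs\<in>A j. subst_atom \<tau> (fst bs) = a j) \<and>
        N = F \<union> (\<lambda>j. (a j, Min (insert (p j) (prios (A j))))) ` {..<h} \<and>
        (\<forall>x\<in>X \<union> vars_pg N. \<tau> x = Var x))"

definition apply_substs :: "('f,'v) pgoal \<Rightarrow> ('f,'v) subst list \<Rightarrow> ('f,'v) pgoal" where
  "apply_substs G ths = foldl (\<lambda>H \<theta>. subst_pg \<theta> H) G ths"

definition sld_deriv :: "('f,'v) step set \<Rightarrow> ('f,'v) clause set \<Rightarrow> ('f,'v) pgoal
     \<Rightarrow> ('f,'v) clause list \<Rightarrow> ('f,'v) pgoal \<Rightarrow> bool" where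
  "sld_deriv S P G0 Z R \<longleftrightarrow>
     (\<exists>(m::nat) G cs \<xi>s \<theta>s. G 0 = G0 \<and> G m = R \<and> Z = map cs [0..<m] \<and>
        (\<forall>j<m. cs j \<in> P \<and> is_step (G j, cs j, \<xi>s j, \<theta>s j, G (Suc j)) \<and>
               (G j, cs j, \<xi>s j, \<theta>s j, G (Suc j)) \<in> S \<and>
               vars_clause (subst_clause (\<xi>s j) (cs j)) \<inter>
                 (vars_pg G0 \<union> (\<Union>i<j. vars_clause (subst_clause (\<xi>s i) (cs i)))) = {}))"

definition rsld_deriv :: "('f,'v) step set \<Rightarrow> ('f,'v) clause set \<Rightarrow> ('f,'v) pgoal
     \<Rightarrow> ('f,'v) clause list \<Rightarrow> ('f,'v) pgoal \<Rightarrow> bool" where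
  "rsld_deriv S P G0 D Q \<longleftrightarrow>
     (\<exists>(n::nat) G N \<alpha> cs \<xi>s \<theta>s. G 0 = G0 \<and> N n = Q \<and> D = map cs [0..<n] \<and>
        (\<forall>j\<le>n. reduced (vars_pg (apply_substs G0 (map \<theta>s [0..<j]))) (\<alpha> j) (G j) (N j)) \<and>
        (\<forall>j<n. cs j \<in> P \<and> is_step (N j, cs j, \<xi>s j, \<theta>s j, G (Suc j)) \<and>
               (N j, cs j, \<xi>s j, \<theta>s j, G (Suc j)) \<in> S \<and>
               vars_clause (subst_clause (\<xi>s j) (cs j)) \<inter>
                 (vars_pg G0 \<union> (\<Union>i<j. vars_clause (subst_clause (\<xi>s i) (cs i)))) = {}))"

end

theory Submission
  imports Defs
begin

subsection \<open>Substitution basics\<close>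

lemma subst_trm_comp: "subst_trm \<sigma> (subst_trm \<theta> t) = subst_trm (\<lambda>x. subst_trm \<sigma> (\<theta> x)) t"
  by (induction t) auto

lemma subst_trm_cong: "(\<And>x. x \<in> vars_trm t \<Longrightarrow> \<sigma> x = \<tau> x) \<Longrightarrow> subst_trm \<sigma> t = subst_trm \<tau> t"
  by (induction t) auto

lemma subst_trm_Var[simp]: "subst_trm Var t = t"
  by (induction t) (auto simp: map_idI)

lemma vars_subst_trm: "vars_trm (subst_trm \<sigma> t) = (\<Union>x\<in>vars_trm t. vars_trm (\<sigma> x))"
  by (induction t) auto

lemma subst_atom_comp: "subst_atom \<sigma> (subst_atom \<theta> a) = subst_atom (\<lambda>x. subst_trm \<sigma> (\<theta> x)) a"
  by (cases a) (auto simp: subst_trm_comp)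

lemma subst_atom_cong: "(\<And>x. x \<in> vars_atom a \<Longrightarrow> \<sigma> x = \<tau> x) \<Longrightarrow> subst_atom \<sigma> a = subst_atom \<tau> a"
  by (cases a) (auto intro!: subst_trm_cong)

lemma subst_atom_Var[simp]: "subst_atom Var a = a"
  by (cases a) (auto simp: map_idI)

lemma vars_subst_atom: "vars_atom (subst_atom \<sigma> a) = (\<Union>x\<in>vars_atom a. vars_trm (\<sigma> x))"
  by (cases a) (auto simp: vars_subst_trm)

lemma finite_vars_trm[simp]: "finite (vars_trm t)"
  by (induction t) auto

lemma finite_vars_atom[simp]: "finite (vars_atom a)"
  by (cases a) auto

subsection \<open>Unification\<close>

fun tsize :: "('f,'v) trm \<Rightarrow> nat" where
  "tsize (Var x) = 1"
| "tsize (Fn f ts) = 1 + sum_list (map tsize ts)"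

lemma tsize_pos: "tsize t > 0"
  by (cases t) auto

lemma tsize_mem: "t \<in> set ts \<Longrightarrow> tsize t \<le> sum_list (map tsize ts)"
  by (induction ts) auto

lemma occurs_size: "x \<in> vars_trm t \<Longrightarrow> t \<noteq> Var x \<Longrightarrow> tsize (\<sigma> x) < tsize (subst_trm \<sigma> t)"
proof (induction t)
  case (Var y) then show ?case by auto
next
  case (Fn f ts)
  then obtain u where u: "u \<in> set ts" "x \<in> vars_trm u" by auto
  have "tsize (\<sigma> x) \<le> tsize (subst_trm \<sigma> u)"
  proof (cases "u = Var x")
    case True then show ?thesis by simp
  next
    case False then show ?thesis using Fn.IH[OF u(1) u(2)] by simp
  qed
  also have "\<dots> \<le> sum_list (map tsize (map (subst_trm \<sigma>) ts))"
    using u(1) by (intro tsize_mem) auto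
  finally show ?case by simp
qed

definition unif :: "('f,'v) subst \<Rightarrow> (('f,'v) trm \<times> ('f,'v) trm) list \<Rightarrow> bool" where
  "unif \<sigma> E \<longleftrightarrow> (\<forall>(s,t)\<in>set E. subst_trm \<sigma> s = subst_trm \<sigma> t)"

definition vars_eqs :: "(('f,'v) trm \<times> ('f,'v) trm) list \<Rightarrow> 'v set" where
  "vars_eqs E = (\<Union>(s,t)\<in>set E. vars_trm s \<union> vars_trm t)"

definition esize :: "(('f,'v) trm \<times> ('f,'v) trm) list \<Rightarrow> nat" where
  "esize E = sum_list (map (\<lambda>(s,t). tsize s + tsize t) E)"

lemma finite_vars_eqs[simp]: "finite (vars_eqs E)"
  unfolding vars_eqs_def by auto

lemma vars_subst_sub: "vars_trm (subst_trm \<theta> u) \<subseteq> vars_trm u \<union> subst_vars \<theta>"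
proof
  fix y assume "y \<in> vars_trm (subst_trm \<theta> u)"
  then obtain x where x: "x \<in> vars_trm u" "y \<in> vars_trm (\<theta> x)" unfolding vars_subst_trm by auto
  show "y \<in> vars_trm u \<union> subst_vars \<theta>"
  proof (cases "\<theta> x = Var x")
    case True then show ?thesis using x by auto
  next
    case False then show ?thesis using x unfolding subst_vars_def by auto
  qed
qed

definition mgu_eqs :: "('f,'v) subst \<Rightarrow> (('f,'v) trm \<times> ('f,'v) trm) list \<Rightarrow> bool" where
  "mgu_eqs \<theta> E \<longleftrightarrow> unif \<theta> E \<and> (\<forall>\<sigma>. unif \<sigma> E \<longrightarrow> (\<exists>\<delta>. \<forall>x. \<sigma> x = subst_trm \<delta> (\<theta> x))) \<and>
     idempotent \<theta> \<and> subst_vars \<theta> \<subseteq> vars_eqs E"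

lemma mgu_eqs_swap: "mgu_eqs \<theta> ((s,t)#E) = mgu_eqs \<theta> ((t,s)#E)"
  unfolding mgu_eqs_def unif_def vars_eqs_def by auto

lemma mgu_eqs_Nil: "mgu_eqs Var []"
  unfolding mgu_eqs_def unif_def idempotent_def subst_vars_def by auto

lemma unif_Cons: "unif \<sigma> ((s,t)#E) \<longleftrightarrow> subst_trm \<sigma> s = subst_trm \<sigma> t \<and> unif \<sigma> E"
  unfolding unif_def by auto

lemma vars_eqs_Cons: "vars_eqs ((s,t)#E) = vars_trm s \<union> vars_trm t \<union> vars_eqs E"
  unfolding vars_eqs_def by auto

lemma var_elim:
  assumes x: "x \<notin> vars_trm u"
    and m: "mgu_eqs \<theta>'' (map (\<lambda>(s,t). (subst_trm (Var(x:=u)) s, subst_trm (Var(x:=u)) t)) E')"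
  shows "mgu_eqs (\<lambda>y. subst_trm \<theta>'' ((Var(x:=u)) y)) ((Var x, u) # E')"
proof -
  define \<rho> where "\<rho> = Var(x:=u)"
  define E'' where "E'' = map (\<lambda>(s,t). (subst_trm \<rho> s, subst_trm \<rho> t)) E'"
  define \<theta> where "\<theta> = (\<lambda>y. subst_trm \<theta>'' (\<rho> y))"
  have m': "mgu_eqs \<theta>'' E''" using m unfolding E''_def \<rho>_def .
  have vrho: "vars_trm (\<rho> y) \<subseteq> (if y = x then vars_trm u else {y})" for y
    unfolding \<rho>_def by auto
  have vrho_s: "vars_trm (subst_trm \<rho> s) \<subseteq> (vars_trm s - {x}) \<union> vars_trm u" for s
  proof
    fix z assume "z \<in> vars_trm (subst_trm \<rho> s)"
    then obtain y where y: "y \<in> vars_trm s" "z \<in> vars_trm (\<rho> y)" unfolding vars_subst_trm by auto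
    show "z \<in> (vars_trm s - {x}) \<union> vars_trm u"
      using y vrho[of y] by (cases "y = x") auto
  qed
  have vE'': "vars_eqs E'' \<subseteq> (vars_eqs E' - {x}) \<union> vars_trm u"
  proof
    fix z assume "z \<in> vars_eqs E''"
    then obtain s t where st: "(s,t) \<in> set E'" "z \<in> vars_trm (subst_trm \<rho> s) \<union> vars_trm (subst_trm \<rho> t)"
      unfolding E''_def vars_eqs_def by auto
    then show "z \<in> (vars_eqs E' - {x}) \<union> vars_trm u"
      using vrho_s[of s] vrho_s[of t] unfolding vars_eqs_def by blast
  qed
  have xE'': "x \<notin> vars_eqs E''" using vE'' x by auto
  have svars: "subst_vars \<theta>'' \<subseteq> vars_eqs E''" using m' unfolding mgu_eqs_def by auto
  have xs: "x \<notin> subst_vars \<theta>''" using svars xE'' by auto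
  have rho_u: "subst_trm \<rho> u = u"
    using x by (subst subst_trm_cong[where \<tau>=Var]) (auto simp: \<rho>_def)
  have comp: "subst_trm \<theta> s = subst_trm \<theta>'' (subst_trm \<rho> s)" for s
    unfolding \<theta>_def subst_trm_comp ..
  have unif'': "unif \<theta>'' E''" using m' unfolding mgu_eqs_def by auto
  have U: "unif \<theta> ((Var x, u) # E')"
    unfolding unif_Cons
  proof
    show "subst_trm \<theta> (Var x) = subst_trm \<theta> u"
      by (simp add: comp rho_u) (simp add: \<theta>_def \<rho>_def)
    show "unif \<theta> E'"
      using unif'' unfolding unif_def E''_def by (auto simp: comp)
  qed
  have G: "\<exists>\<delta>. \<forall>y. \<sigma> y = subst_trm \<delta> (\<theta> y)" if s: "unif \<sigma> ((Var x, u) # E')" for \<sigma>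
  proof -
    have sx: "\<sigma> x = subst_trm \<sigma> u" using s unfolding unif_Cons by auto
    have srho: "subst_trm \<sigma> (\<rho> y) = \<sigma> y" for y using sx unfolding \<rho>_def by auto
    have srho2: "subst_trm \<sigma> (subst_trm \<rho> t) = subst_trm \<sigma> t" for t
      unfolding subst_trm_comp srho by (rule subst_trm_cong) auto
    have "unif \<sigma> E''" using s unfolding unif_def E''_def by (auto simp: srho2)
    then obtain \<delta> where d: "\<And>y. \<sigma> y = subst_trm \<delta> (\<theta>'' y)" using m' unfolding mgu_eqs_def by blast
    have "subst_trm \<delta> (\<theta> y) = \<sigma> y" for y
    proof -
      have "subst_trm \<delta> (\<theta> y) = subst_trm (\<lambda>z. subst_trm \<delta> (\<theta>'' z)) (\<rho> y)"
        unfolding \<theta>_def subst_trm_comp ..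
      also have "\<dots> = subst_trm \<sigma> (\<rho> y)" using d by (metis)
      also have "\<dots> = \<sigma> y" by (rule srho)
      finally show ?thesis .
    qed
    then show ?thesis by metis
  qed
  have nx: "x \<notin> vars_trm (\<theta> y)" for y
  proof
    assume a: "x \<in> vars_trm (\<theta> y)"
    have "vars_trm (\<theta> y) \<subseteq> vars_trm (\<rho> y) \<union> subst_vars \<theta>''"
      unfolding \<theta>_def by (rule vars_subst_sub)
    with a xs have "x \<in> vars_trm (\<rho> y)" by auto
    with vrho[of y] x show False by (auto split: if_splits)
  qed
  have th_eq: "\<theta> z = \<theta>'' z" if "z \<noteq> x" for z
    using that unfolding \<theta>_def \<rho>_def by simp
  have idem'': "\<And>z. subst_trm \<theta>'' (\<theta>'' z) = \<theta>'' z" using m' unfolding mgu_eqs_def idempotent_def by auto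
  have I: "idempotent \<theta>"
    unfolding idempotent_def
  proof
    fix y
    have "subst_trm \<theta> (\<theta> y) = subst_trm \<theta>'' (\<theta> y)"
      by (rule subst_trm_cong) (use nx th_eq in metis)
    also have "\<dots> = subst_trm (\<lambda>z. subst_trm \<theta>'' (\<theta>'' z)) (\<rho> y)"
      unfolding \<theta>_def subst_trm_comp ..
    also have "\<dots> = \<theta> y" unfolding idem'' \<theta>_def ..
    finally show "subst_trm \<theta> (\<theta> y) = \<theta> y" .
  qed
  have S: "subst_vars \<theta> \<subseteq> vars_eqs ((Var x, u) # E')"
  proof
    fix z assume "z \<in> subst_vars \<theta>"
    then obtain y where y: "\<theta> y \<noteq> Var y" "z = y \<or> z \<in> vars_trm (\<theta> y)"
      unfolding subst_vars_def by auto
    have vE: "vars_eqs E'' \<subseteq> vars_eqs ((Var x, u) # E')" using vE'' by (auto simp: vars_eqs_Cons)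
    show "z \<in> vars_eqs ((Var x, u) # E')"
    proof (cases "y = x")
      case True
      have "vars_trm (\<theta> y) \<subseteq> vars_trm u \<union> subst_vars \<theta>''"
        using True vars_subst_sub[of \<theta>'' u] unfolding \<theta>_def \<rho>_def by simp
      then show ?thesis using y True svars vE by (auto simp: vars_eqs_Cons)
    next
      case False
      then have "\<theta>'' y \<noteq> Var y" using y th_eq by auto
      then have "y \<in> subst_vars \<theta>''" "vars_trm (\<theta>'' y) \<subseteq> subst_vars \<theta>''" unfolding subst_vars_def by auto
      then show ?thesis using y False th_eq svars vE by auto
    qed
  qed
  show ?thesis using U G I S unfolding mgu_eqs_def \<theta>_def \<rho>_def by blast
qed

lemma vars_zip: "length ss = length ts \<Longrightarrow>
  (\<Union>(s,t)\<in>set (zip ss ts). vars_trm s \<union> vars_trm t) = (\<Union>s\<in>set ss. vars_trm s) \<union> (\<Union>t\<in>set ts. vars_trm t)"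
proof (induction ss arbitrary: ts)
  case Nil then show ?case by simp
next
  case (Cons s ss) then show ?case by (cases ts) auto
qed

lemma esize_zip: "length ss = length ts \<Longrightarrow>
  esize (zip ss ts) = sum_list (map tsize ss) + sum_list (map tsize ts)"
proof (induction ss arbitrary: ts)
  case Nil then show ?case by (simp add: esize_def)
next
  case (Cons s ss) then show ?case by (cases ts) (auto simp: esize_def)
qed

lemma esize_append: "esize (A @ B) = esize A + esize B"
  by (simp add: esize_def)

lemma esize_Cons: "esize ((s,t)#E) = tsize s + tsize t + esize E"
  by (simp add: esize_def)

lemma unif_zip: "length ss = length ts \<Longrightarrow>
   (map (subst_trm \<sigma>) ss = map (subst_trm \<sigma>) ts) = unif \<sigma> (zip ss ts)"
proof (induction ss arbitrary: ts)
  case Nil then show ?case by (simp add: unif_def)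
next
  case (Cons s ss) then show ?case by (cases ts) (auto simp: unif_def)
qed

lemma unify_exists_aux: "\<forall>\<sigma>. unif \<sigma> E \<longrightarrow> (\<exists>\<theta>. mgu_eqs \<theta> E)"
proof (induction E rule: wf_induct[OF wf_measures[of "[\<lambda>E. card (vars_eqs E), esize]"]])
  case (1 E)
  note IH = 1
  show ?case
  proof (intro allI impI)
    fix \<sigma> assume s: "unif \<sigma> E"
    show "\<exists>\<theta>. mgu_eqs \<theta> E"
    proof (cases E)
      case Nil then show ?thesis using mgu_eqs_Nil by blast
    next
      case (Cons st E')
      obtain s t where st: "st = (s,t)" by fastforce
      have varcase: "\<exists>\<theta>. mgu_eqs \<theta> ((Var x, u) # E')"
        if xu: "u \<noteq> Var x" and sx: "\<sigma> x = subst_trm \<sigma> u" and uE: "unif \<sigma> E'"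
          and vE: "vars_eqs E = vars_eqs ((Var x, u) # E')" for x u
      proof -
        have x: "x \<notin> vars_trm u"
          using occurs_size[of x u \<sigma>] xu sx by auto
        define E'' where "E'' = map (\<lambda>(s,t). (subst_trm (Var(x:=u)) s, subst_trm (Var(x:=u)) t)) E'"
        have sub: "vars_eqs E'' \<subseteq> vars_eqs ((Var x, u) # E') - {x}"
        proof
          fix z assume "z \<in> vars_eqs E''"
          then obtain s t where st: "(s,t) \<in> set E'" "z \<in> vars_trm (subst_trm (Var(x:=u)) s) \<union> vars_trm (subst_trm (Var(x:=u)) t)"
            unfolding E''_def vars_eqs_def by auto
          then obtain y where y: "y \<in> vars_trm s \<union> vars_trm t" "z \<in> vars_trm ((Var(x:=u)) y)"
            unfolding vars_subst_trm by auto
          show "z \<in> vars_eqs ((Var x, u) # E') - {x}"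
            using y st(1) x by (cases "y = x") (auto simp: vars_eqs_Cons vars_eqs_def)
        qed
        have "card (vars_eqs E'') < card (vars_eqs E)"
          unfolding vE by (rule psubset_card_mono) (use sub in \<open>auto simp: vars_eqs_Cons\<close>)
        then have "(E'', E) \<in> measures [\<lambda>E. card (vars_eqs E), esize]" by simp
        moreover have "unif \<sigma> E''"
        proof -
          have srho: "subst_trm \<sigma> ((Var(x:=u)) y) = \<sigma> y" for y using sx by auto
          have "subst_trm \<sigma> (subst_trm (Var(x:=u)) t) = subst_trm \<sigma> t" for t
            unfolding subst_trm_comp srho by (rule subst_trm_cong) auto
          then show ?thesis using uE unfolding unif_def E''_def by auto
        qed
        ultimately obtain \<theta>'' where "mgu_eqs \<theta>'' E''" using IH by blast
        then show ?thesis using var_elim[OF x] unfolding E''_def by blast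
      qed
      show ?thesis
      proof (cases "s = t")
        case True
        have "(E', E) \<in> measures [\<lambda>E. card (vars_eqs E), esize]"
        proof -
          have sub: "vars_eqs E' \<subseteq> vars_eqs E" using Cons st by (auto simp: vars_eqs_Cons)
          have "card (vars_eqs E') \<le> card (vars_eqs E)" by (rule card_mono[OF _ sub]) simp
          moreover have "esize E' < esize E" using Cons st tsize_pos[of s] by (simp add: esize_Cons)
          ultimately show ?thesis by auto
        qed
        moreover have "unif \<sigma> E'" using s Cons by (simp add: unif_def)
        ultimately obtain \<theta> where m: "mgu_eqs \<theta> E'" using IH by blast
        have "mgu_eqs \<theta> E" using m True Cons st
          unfolding mgu_eqs_def by (auto simp: unif_Cons vars_eqs_Cons)
        then show ?thesis by blast
      next
        case False
        show ?thesis
        proof (cases s)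
          case (Var x)
          have "\<exists>\<theta>. mgu_eqs \<theta> ((Var x, t) # E')"
            by (rule varcase) (use False Var s Cons st in \<open>auto simp: unif_Cons\<close>)
          then show ?thesis using Var Cons st by simp
        next
          case (Fn f ss)
          show ?thesis
          proof (cases t)
            case (Var x)
            have "\<exists>\<theta>. mgu_eqs \<theta> ((Var x, s) # E')"
              by (rule varcase) (use False Var s Cons st in \<open>auto simp: unif_Cons vars_eqs_Cons\<close>)
            then show ?thesis using Var Cons st mgu_eqs_swap by metis
          next
            case (Fn g ts)
            have eq: "Fn f (map (subst_trm \<sigma>) ss) = Fn g (map (subst_trm \<sigma>) ts)"
              using s Cons st \<open>s = Fn f ss\<close> Fn by (simp add: unif_Cons)
            then have fg: "f = g" and len: "length ss = length ts"
              by (auto dest: map_eq_imp_length_eq)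
            define E'' where "E'' = zip ss ts @ E'"
            have U: "unif \<tau> E = unif \<tau> E''" for \<tau>
              using unif_zip[OF len, of \<tau>] Cons st \<open>s = Fn f ss\<close> Fn fg
              by (auto simp: unif_Cons E''_def unif_def)
            have V: "vars_eqs E'' = vars_eqs E"
              using vars_zip[OF len] Cons st \<open>s = Fn f ss\<close> Fn
              by (auto simp: vars_eqs_Cons E''_def vars_eqs_def)
            have "esize E'' < esize E"
              using esize_zip[OF len] Cons st \<open>s = Fn f ss\<close> Fn
              by (simp add: E''_def esize_append esize_Cons)
            then have "(E'', E) \<in> measures [\<lambda>E. card (vars_eqs E), esize]" using V by simp
            moreover have "unif \<sigma> E''" using s U by simp
            ultimately obtain \<theta> where m: "mgu_eqs \<theta> E''" using IH by blast
            have "mgu_eqs \<theta> E" using m U V unfolding mgu_eqs_def by simp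
            then show ?thesis by blast
          qed
        qed
      qed
    qed
  qed
qed

lemma unify_atoms:
  assumes "unifier \<sigma> a b"
  shows "\<exists>\<theta>. is_mgu \<theta> a b \<and> idempotent \<theta> \<and> relevant \<theta> a b"
proof -
  obtain p ts where a: "a = Atom p ts" by (cases a)
  obtain q us where b: "b = Atom q us" by (cases b)
  have pq: "p = q" and len: "length ts = length us" using assms a b
    by (auto simp: unifier_def dest: map_eq_imp_length_eq)
  have U: "unifier \<tau> a b = unif \<tau> (zip ts us)" for \<tau>
    using unif_zip[OF len, of \<tau>] a b pq by (auto simp: unifier_def)
  have V: "vars_eqs (zip ts us) = vars_atom a \<union> vars_atom b"
    using vars_zip[OF len] a b by (auto simp: vars_eqs_def)
  obtain \<theta> where "mgu_eqs \<theta> (zip ts us)" using unify_exists_aux assms U by blast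
  then show ?thesis unfolding mgu_eqs_def is_mgu_def relevant_def U V by blast
qed

subsection \<open>p-goal basics\<close>

lemma mem_subst_pg: "(b, q) \<in> subst_pg \<sigma> G \<longleftrightarrow> (\<exists>a. (a,q) \<in> G \<and> b = subst_atom \<sigma> a)"
  unfolding subst_pg_def by force

lemma mem_shift_pg: "(b, q) \<in> shift_pg \<pi> G \<longleftrightarrow> (\<exists>p. (b,p) \<in> G \<and> q = \<pi> p)"
  unfolding shift_pg_def by force

lemma prios_subst_pg[simp]: "prios (subst_pg \<sigma> G) = prios G"
  unfolding prios_def subst_pg_def by force

lemma prios_shift_pg[simp]: "prios (shift_pg \<pi> G) = \<pi> ` prios G"
  unfolding prios_def shift_pg_def by force

lemma prios_union[simp]: "prios (A \<union> B) = prios A \<union> prios B"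
  unfolding prios_def by auto

lemma prios_insert[simp]: "prios (insert (a,p) B) = insert p (prios B)"
  unfolding prios_def by auto

lemma prios_empty[simp]: "prios {} = {}"
  unfolding prios_def by auto

lemma prios_mem: "(a,p) \<in> G \<Longrightarrow> p \<in> prios G"
  unfolding prios_def by force

lemma prios_memE: "p \<in> prios G \<Longrightarrow> (\<And>a. (a,p) \<in> G \<Longrightarrow> thesis) \<Longrightarrow> thesis"
  unfolding prios_def by force

lemma subst_pg_union: "subst_pg \<sigma> (A \<union> B) = subst_pg \<sigma> A \<union> subst_pg \<sigma> B"
  unfolding subst_pg_def by auto

lemma shift_pg_union: "shift_pg \<sigma> (A \<union> B) = shift_pg \<sigma> A \<union> shift_pg \<sigma> B"
  unfolding shift_pg_def by auto

lemma subst_pg_Var[simp]: "subst_pg Var G = G"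
  unfolding subst_pg_def by force

lemma shift_pg_id[simp]: "shift_pg id G = G"
  unfolding shift_pg_def by force

lemma finite_prios: "finite G \<Longrightarrow> finite (prios G)"
  unfolding prios_def by auto

lemma pgoal_same: "pgoal G \<Longrightarrow> (a,p) \<in> G \<Longrightarrow> (b,p) \<in> G \<Longrightarrow> a = b"
  unfolding pgoal_def inj_on_def by force

lemma vars_pg_union[simp]: "vars_pg (A \<union> B) = vars_pg A \<union> vars_pg B"
  unfolding vars_pg_def by auto

lemma vars_pg_mem: "(a,p) \<in> G \<Longrightarrow> vars_atom a \<subseteq> vars_pg G"
  unfolding vars_pg_def by force

lemma vars_pg_subst: "vars_pg (subst_pg \<sigma> G) = (\<Union>(a,p)\<in>G. vars_atom (subst_atom \<sigma> a))"
  unfolding vars_pg_def subst_pg_def by force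

lemma vars_pg_shift[simp]: "vars_pg (shift_pg \<pi> G) = vars_pg G"
  unfolding vars_pg_def shift_pg_def by force

lemma finite_vars_pg: "finite G \<Longrightarrow> finite (vars_pg G)"
  unfolding vars_pg_def by auto

lemma shifting_id: "shifting id"
  unfolding shifting_def by (auto simp: strict_mono_def)

lemma first_split_min: "first_split G a p K \<Longrightarrow> q \<in> prios G \<Longrightarrow> q \<noteq> p \<Longrightarrow> p < q"
  unfolding first_split_def by auto

lemma first_split_mem: "first_split G a p K \<Longrightarrow> p \<in> prios G"
  unfolding first_split_def by auto

lemma first_split_unique:
  assumes A: "first_split G a p K" and B: "first_split G a' p' K'"
  shows "a = a' \<and> p = p' \<and> K = K'"
proof -
  have pp: "p = p'"
  proof (rule ccontr)
    assume ne: "p \<noteq> p'"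
    have "p < p'" using first_split_min[OF A first_split_mem[OF B]] ne by auto
    moreover have "p' < p" using first_split_min[OF B first_split_mem[OF A]] ne by auto
    ultimately show False by simp
  qed
  have aa: "a = a'"
  proof (rule ccontr)
    assume ne: "a \<noteq> a'"
    have "(a', p) \<in> G" using B pp unfolding first_split_def by auto
    then have "(a', p) \<in> K" using A ne unfolding first_split_def by auto
    then have "p \<in> prios K" by (rule prios_mem)
    then show False using A unfolding first_split_def by auto
  qed
  have "K = G - {(a,p)}" "K' = G - {(a',p')}" using A B unfolding first_split_def by auto
  then show ?thesis using pp aa by auto
qed

lemma first_split_exists:
  assumes "finite G" "(a,p) \<in> G" "\<forall>q\<in>prios G. p \<le> q" "inj_on snd G"
  shows "first_split G a p (G - {(a,p)})"
proof -
  have "q \<in> prios (G - {(a,p)}) \<Longrightarrow> p < q" for q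
  proof -
    assume "q \<in> prios (G - {(a,p)})"
    then obtain b where b: "(b,q) \<in> G" "(b,q) \<noteq> (a,p)" unfolding prios_def by force
    have "p \<le> q" using assms(3) b prios_mem by metis
    moreover have "p \<noteq> q" using b assms(2,4) unfolding inj_on_def by force
    ultimately show "p < q" by simp
  qed
  then show ?thesis unfolding first_split_def using assms by auto
qed

lemma fresh_perm:
  assumes inf: "infinite (UNIV :: 'v set)" and V: "finite (V :: 'v set)" and U: "finite (U :: 'v set)"
  shows "\<exists>\<pi>. bij \<pi> \<and> \<pi> ` U \<inter> V = {}"
proof -
  have "infinite (UNIV - (V \<union> U))" using inf V U by auto
  then obtain W where W: "W \<subseteq> UNIV - (V \<union> U)" "finite W" "card W = card U"
    using infinite_arbitrarily_large by metis
  obtain g where g: "bij_betw g U W" using finite_same_card_bij[OF U W(2)] W(3) by metis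
  define \<pi> where "\<pi> x = (if x \<in> U then g x else if x \<in> W then inv_into U g x else x)" for x
  have UW: "U \<inter> W = {}" using W by auto
  have inv1: "\<pi> (\<pi> x) = x" for x
  proof (cases "x \<in> U")
    case True
    then have "g x \<in> W" using g by (auto simp: bij_betw_def)
    then show ?thesis using True UW g unfolding \<pi>_def by (auto simp: bij_betw_def)
  next
    case False
    show ?thesis
    proof (cases "x \<in> W")
      case True
      then have "inv_into U g x \<in> U" using g by (metis bij_betw_def inv_into_into)
      moreover have "g (inv_into U g x) = x" using g True by (metis bij_betw_def f_inv_into_f)
      ultimately show ?thesis using True False unfolding \<pi>_def by auto
    next
      case False2: False
      then show ?thesis using False unfolding \<pi>_def by auto
    qed
  qed
  have "bij \<pi>" by (rule o_bij[where g=\<pi>]) (auto simp: inv1 fun_eq_iff)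
  moreover have "\<pi> ` U \<inter> V = {}" using g W unfolding \<pi>_def bij_betw_def by auto
  ultimately show ?thesis by blast
qed

lemma vars_subst_ren: "vars_atom (subst_atom (\<lambda>x. Var (\<pi> x)) a) = \<pi> ` vars_atom a"
  unfolding vars_subst_atom by auto

lemma vars_pg_ren: "vars_pg (subst_pg (\<lambda>x. Var (\<pi> x)) B) = \<pi> ` vars_pg B"
proof -
  have "vars_pg (subst_pg (\<lambda>x. Var (\<pi> x)) B) = (\<Union>ap\<in>B. \<pi> ` vars_atom (fst ap))"
    unfolding vars_pg_def subst_pg_def by (simp add: case_prod_beta vars_subst_ren)
  also have "\<dots> = \<pi> ` vars_pg B" unfolding vars_pg_def image_UN ..
  finally show ?thesis .
qed

lemma vars_clause_ren: "vars_clause (subst_clause (\<lambda>x. Var (\<pi> x)) c) = \<pi> ` vars_clause c"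
proof -
  show ?thesis unfolding vars_clause_def subst_clause_def by (simp add: vars_subst_ren vars_pg_ren image_Un)
qed

lemma finite_vars_clause: "valid_clause c \<Longrightarrow> finite (vars_clause c)"
  unfolding valid_clause_def vars_clause_def pgoal_def by (auto intro: finite_vars_pg)

definition sqsplit :: "('f,'v) step set \<Rightarrow> (('f,'v) clause \<Rightarrow> ('f,'v) pgoal) \<Rightarrow> (('f,'v) clause \<Rightarrow> ('f,'v) pgoal) \<Rightarrow> bool" where
  "sqsplit SQ ms mq \<longleftrightarrow> (\<forall>h B. valid_clause (h, B) \<longrightarrow>
        (pgoal (ms (h,B)) \<and> pgoal (mq (h,B)) \<and> below (ms (h,B)) (mq (h,B)) \<and> B = ms (h,B) \<union> mq (h,B) \<and>
           (\<forall>G \<xi> \<mu> R. (G, (h, B), \<xi>, \<mu>, R) \<in> SQ \<longrightarrow>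
              (\<forall>a p K. first_split G a p K \<longrightarrow>
                 (\<exists>\<gamma>. shifting \<gamma> \<and>
                    below (shift_pg \<gamma> (subst_pg \<xi> (ms (h,B)))) K \<and>
                    below K (shift_pg \<gamma> (subst_pg \<xi> (mq (h,B)))) \<and>
                    below (shift_pg \<gamma> (subst_pg \<xi> (ms (h,B)))) (shift_pg \<gamma> (subst_pg \<xi> (mq (h,B)))) \<and>
                    R = subst_pg \<mu> (shift_pg \<gamma> (subst_pg \<xi> (ms (h,B))) \<union> K \<union>
                                     shift_pg \<gamma> (subst_pg \<xi> (mq (h,B)))))))))"

lemma sqsplit_exists:
  assumes "stack_queue SQ"
  shows "\<exists>ms mq. sqsplit SQ ms mq"
proof -
  define \<Phi> where "\<Phi> h B Ms Mq \<longleftrightarrow> pgoal Ms \<and> pgoal Mq \<and> below Ms Mq \<and> B = Ms \<union> Mq \<and>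
           (\<forall>G \<xi> \<mu> R. (G, (h, B), \<xi>, \<mu>, R) \<in> SQ \<longrightarrow>
              (\<forall>a p K. first_split G a p K \<longrightarrow>
                 (\<exists>\<gamma>. shifting \<gamma> \<and>
                    below (shift_pg \<gamma> (subst_pg \<xi> Ms)) K \<and>
                    below K (shift_pg \<gamma> (subst_pg \<xi> Mq)) \<and>
                    below (shift_pg \<gamma> (subst_pg \<xi> Ms)) (shift_pg \<gamma> (subst_pg \<xi> Mq)) \<and>
                    R = subst_pg \<mu> (shift_pg \<gamma> (subst_pg \<xi> Ms) \<union> K \<union>
                                     shift_pg \<gamma> (subst_pg \<xi> Mq)))))" for h B Ms Mq
  have ex: "\<forall>h B. valid_clause (h, B) \<longrightarrow> (\<exists>Ms Mq. \<Phi> h B Ms Mq)"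
    using assms unfolding stack_queue_def \<Phi>_def by blast
  define ms where "ms c = fst (SOME MM. \<Phi> (fst c) (snd c) (fst MM) (snd MM))" for c :: "('a,'b) clause"
  define mq where "mq c = snd (SOME MM. \<Phi> (fst c) (snd c) (fst MM) (snd MM))" for c :: "('a,'b) clause"
  have "\<Phi> h B (ms (h,B)) (mq (h,B))" if v: "valid_clause (h,B)" for h B
  proof -
    obtain Ms Mq where "\<Phi> h B Ms Mq" using ex v by blast
    then have "\<exists>MM. \<Phi> (fst (h,B)) (snd (h,B)) (fst MM) (snd MM)" by auto
    from someI_ex[OF this] show ?thesis unfolding ms_def mq_def by simp
  qed
  then have "sqsplit SQ ms mq" unfolding sqsplit_def \<Phi>_def by blast
  then show ?thesis by blast
qed

lemma shifting_translate: "shifting (\<lambda>q::rat. q + C)"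
proof -
  have "bij (\<lambda>q::rat. q + C)"
    by (rule o_bij[where g="\<lambda>q. q - C"]) (auto simp: fun_eq_iff)
  then show ?thesis unfolding shifting_def by (auto simp: strict_mono_def)
qed

lemma translate_avoid:
  assumes "finite (A::rat set)" "finite B"
  shows "\<exists>C. (\<lambda>q. q + C) ` B \<inter> A = {}"
proof -
  define M where "M = Max (abs ` (A \<union> B) \<union> {0})"
  have M: "\<bar>x\<bar> \<le> M" if "x \<in> A \<union> B" for x
    unfolding M_def using assms that by (intro Max_ge) auto
  have "(\<lambda>q. q + (2*M+1)) ` B \<inter> A = {}"
  proof (rule ccontr)
    assume "(\<lambda>q. q + (2*M+1)) ` B \<inter> A \<noteq> {}"
    then obtain b where b: "b \<in> B" "b + (2*M+1) \<in> A" by auto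
    have "\<bar>b\<bar> \<le> M" using M b by auto
    moreover have "\<bar>b + (2*M+1)\<bar> \<le> M" using M b by auto
    ultimately show False by linarith
  qed
  then show ?thesis by blast
qed

lemma pstep_exists:
  assumes H: "pgoal H" and fs: "first_split H a p K" and c: "valid_clause c"
    and ren: "renaming \<xi>" and disj: "vars_pg H \<inter> vars_clause (subst_clause \<xi> c) = {}"
    and m: "is_mgu \<theta> a (subst_atom \<xi> (fst c))" "idempotent \<theta>" "relevant \<theta> a (subst_atom \<xi> (fst c))"
  shows "\<exists>\<pi> R. pstep H c \<xi> \<theta> \<pi> R"
proof -
  have fK: "finite K" using H fs unfolding pgoal_def first_split_def by auto
  have fB: "finite (snd c)" using c unfolding valid_clause_def pgoal_def by auto
  obtain C where C: "(\<lambda>q. q + C) ` prios (snd c) \<inter> prios K = {}"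
    using translate_avoid[OF finite_prios[OF fK] finite_prios[OF fB]] by blast
  have "pstep H c \<xi> \<theta> (\<lambda>q. q + C) (subst_pg \<theta> (K \<union> shift_pg (\<lambda>q. q + C) (subst_pg \<xi> (snd c))))"
    using assms C shifting_translate[of C] unfolding pstep_def
    by (intro conjI exI[where x=a] exI[where x=p] exI[where x=K]) (auto simp: Int_commute)
  then show ?thesis by blast
qed

lemma cong_lowering_refl:
  assumes fs: "first_split H a p K"
    and p1: "pstep H c \<xi>1 \<theta>1 \<pi> R1" and p2: "pstep H c \<xi>2 \<theta>2 \<pi> R2"
  shows "cong_lowering (H, c, \<xi>2, \<theta>2, R2) (H, c, \<xi>1, \<theta>1, R1)"
  unfolding cong_lowering.simps
proof (intro conjI refl exI)
  show "first_split H a p K" by (rule fs)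
  show "shifting id" by (rule shifting_id)
  show "pgoal {}" unfolding pgoal_def by auto
  show "prios {} \<inter> prios (shift_pg id (subst_pg Var K)) = {}" by simp
  show "\<forall>q\<in>prios {}. id p < q" by simp
  show "H = insert (subst_atom Var a, id p) (shift_pg id (subst_pg Var K) \<union> {})"
    using fs unfolding first_split_def by simp
  show "pstep H c \<xi>1 \<theta>1 \<pi> R1" by (rule p1)
  show "pstep H c \<xi>2 \<theta>2 \<pi> R2" by (rule p2)
  show "shifting id" by (rule shifting_id)
  show "shift_pg id (shift_pg \<pi> (snd c)) = shift_pg \<pi> (snd c)" by simp
  show "shift_pg id K = shift_pg id K" by simp
qed

lemma vars_atom_subst_sub: "vars_atom (subst_atom \<theta> a) \<subseteq> vars_atom a \<union> subst_vars \<theta>"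
  by (cases a) (use vars_subst_sub in fastforce)

lemma vars_pg_subst_sub: "vars_pg (subst_pg \<theta> G) \<subseteq> vars_pg G \<union> subst_vars \<theta>"
proof
  fix x assume "x \<in> vars_pg (subst_pg \<theta> G)"
  then obtain a p where ap: "(a,p) \<in> G" "x \<in> vars_atom (subst_atom \<theta> a)"
    unfolding vars_pg_subst by auto
  then show "x \<in> vars_pg G \<union> subst_vars \<theta>"
    using vars_atom_subst_sub[of \<theta> a] vars_pg_mem[OF ap(1)] by auto
qed

lemma sld_step:
  fixes H :: "('f,'v) pgoal"
  assumes inf: "infinite (UNIV :: 'v set)"
    and cs: "complete_steps SQ" and sp: "sqsplit SQ ms mq"
    and P: "program P" and c: "c \<in> P"
    and H: "pgoal H" and fs: "first_split H e y K"
    and V: "finite V" "vars_pg H \<subseteq> V"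
    and eq: "subst_atom \<rho> (subst_atom \<eta> e) = subst_atom \<zeta> (fst c)"
  shows "\<exists>\<xi> \<theta> H' \<delta> \<gamma>. (H, c, \<xi>, \<theta>, H') \<in> SQ \<and> vars_clause (subst_clause \<xi> c) \<inter> V = {} \<and>
     finite (vars_clause (subst_clause \<xi> c)) \<and> shifting \<gamma> \<and>
     below (shift_pg \<gamma> (subst_pg \<xi> (ms c))) K \<and> below K (shift_pg \<gamma> (subst_pg \<xi> (mq c))) \<and>
     below (shift_pg \<gamma> (subst_pg \<xi> (ms c))) (shift_pg \<gamma> (subst_pg \<xi> (mq c))) \<and>
     H' = subst_pg \<theta> (shift_pg \<gamma> (subst_pg \<xi> (ms c)) \<union> K \<union> shift_pg \<gamma> (subst_pg \<xi> (mq c))) \<and>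
     (\<forall>x\<in>V. subst_trm \<delta> (\<theta> x) = subst_trm \<rho> (\<eta> x)) \<and>
     (\<forall>x\<in>vars_clause c. subst_trm \<delta> (subst_trm \<theta> (\<xi> x)) = \<zeta> x) \<and>
     vars_pg H' \<subseteq> V \<union> vars_clause (subst_clause \<xi> c) \<and>
     pgoal (ms c) \<and> pgoal (mq c) \<and> snd c = ms c \<union> mq c \<and> below (ms c) (mq c)"
proof -
  obtain h B where cB: "c = (h,B)" by fastforce
  have valid: "valid_clause c" using P c unfolding program_def by auto
  define U where "U = vars_clause c"
  have fU: "finite U" unfolding U_def by (rule finite_vars_clause[OF valid])
  obtain \<pi> where \<pi>: "bij \<pi>" "\<pi> ` U \<inter> V = {}" using fresh_perm[OF inf V(1) fU] by blast
  define \<xi> where "\<xi> = (\<lambda>x. Var (\<pi> x) :: ('f,'v) trm)"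
  have ren: "renaming \<xi>" unfolding renaming_def \<xi>_def using \<pi>(1) by blast
  have VC: "vars_clause (subst_clause \<xi> c) = \<pi> ` U" unfolding \<xi>_def U_def by (rule vars_clause_ren)
  define \<sigma> where "\<sigma> v = (if v \<in> \<pi> ` U then \<zeta> (inv \<pi> v) else subst_trm \<rho> (\<eta> v))" for v
  have ey: "(e,y) \<in> H" using fs unfolding first_split_def by auto
  have ve: "vars_atom e \<subseteq> V" using vars_pg_mem[OF ey] V(2) by auto
  have vh: "vars_atom h \<subseteq> U" unfolding U_def vars_clause_def cB by auto
  have s1: "subst_atom \<sigma> e = subst_atom \<zeta> h"
  proof -
    have "subst_atom \<sigma> e = subst_atom (\<lambda>v. subst_trm \<rho> (\<eta> v)) e"
      by (rule subst_atom_cong) (use ve \<pi>(2) in \<open>auto simp: \<sigma>_def\<close>)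
    also have "\<dots> = subst_atom \<zeta> h" using eq cB by (simp add: subst_atom_comp)
    finally show ?thesis .
  qed
  have inj\<pi>: "inj \<pi>" using \<pi>(1) bij_def by auto
  have s2: "subst_atom \<sigma> (subst_atom \<xi> h) = subst_atom \<zeta> h"
    unfolding subst_atom_comp
    by (rule subst_atom_cong) (use vh inj\<pi> in \<open>auto simp: \<sigma>_def \<xi>_def inv_f_f\<close>)
  have "unifier \<sigma> e (subst_atom \<xi> (fst c))" unfolding unifier_def using s1 s2 cB by simp
  then obtain \<theta> where th: "is_mgu \<theta> e (subst_atom \<xi> (fst c))" "idempotent \<theta>" "relevant \<theta> e (subst_atom \<xi> (fst c))"
    using unify_atoms by blast
  obtain \<delta> where \<delta>: "\<And>x. \<sigma> x = subst_trm \<delta> (\<theta> x)"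
    using th(1) \<open>unifier \<sigma> e _\<close> unfolding is_mgu_def by blast
  have disj: "vars_pg H \<inter> vars_clause (subst_clause \<xi> c) = {}" using VC V(2) \<pi>(2) by auto
  obtain \<pi>t Rt where "pstep H c \<xi> \<theta> \<pi>t Rt" using pstep_exists[OF H fs valid ren disj th] by blast
  then have "is_step (H, c, \<xi>, \<theta>, Rt)" by auto
  then obtain \<xi>0 \<theta>0 R0 where s0: "(H, c, \<xi>0, \<theta>0, R0) \<in> SQ" using cs unfolding complete_steps_def by blast
  then have "is_step (H, c, \<xi>0, \<theta>0, R0)" using cs unfolding complete_steps_def by blast
  then obtain \<pi>0 where p0: "pstep H c \<xi>0 \<theta>0 \<pi>0 R0" by auto
  then obtain a0 p0' F0 where p0u: "first_split H a0 p0' F0" "shifting \<pi>0"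
     "prios F0 \<inter> prios (shift_pg \<pi>0 (subst_pg \<xi>0 (snd c))) = {}"
    unfolding pstep_def by blast
  have F0: "F0 = K" using first_split_unique[OF p0u(1) fs] by auto
  define H' where "H' = subst_pg \<theta> (K \<union> shift_pg \<pi>0 (subst_pg \<xi> (snd c)))"
  have p': "pstep H c \<xi> \<theta> \<pi>0 H'"
    unfolding pstep_def H'_def using H valid fs ren disj th p0u F0
    by (intro conjI exI[where x=e] exI[where x=y] exI[where x=K]) auto
  have "cong_lowering (H, c, \<xi>, \<theta>, H') (H, c, \<xi>0, \<theta>0, R0)" by (rule cong_lowering_refl[OF fs p0 p'])
  moreover have "cong_lowering (H, c, \<xi>0, \<theta>0, R0) (H, c, \<xi>, \<theta>, H')" by (rule cong_lowering_refl[OF fs p' p0])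
  ultimately have inSQ: "(H, c, \<xi>, \<theta>, H') \<in> SQ" using cs s0 unfolding complete_steps_def by blast
  have spc: "pgoal (ms c) \<and> pgoal (mq c) \<and> below (ms c) (mq c) \<and> B = ms c \<union> mq c"
    using sp valid unfolding sqsplit_def cB by blast
  obtain \<gamma> where \<gamma>: "shifting \<gamma>"
     "below (shift_pg \<gamma> (subst_pg \<xi> (ms c))) K" "below K (shift_pg \<gamma> (subst_pg \<xi> (mq c)))"
     "below (shift_pg \<gamma> (subst_pg \<xi> (ms c))) (shift_pg \<gamma> (subst_pg \<xi> (mq c)))"
     "H' = subst_pg \<theta> (shift_pg \<gamma> (subst_pg \<xi> (ms c)) \<union> K \<union> shift_pg \<gamma> (subst_pg \<xi> (mq c)))"
    using sp valid inSQ fs unfolding sqsplit_def cB by blast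
  have dV: "\<forall>x\<in>V. subst_trm \<delta> (\<theta> x) = subst_trm \<rho> (\<eta> x)"
    using \<delta> \<pi>(2) unfolding \<sigma>_def by (metis disjoint_iff)
  have dC: "\<forall>x\<in>vars_clause c. subst_trm \<delta> (subst_trm \<theta> (\<xi> x)) = \<zeta> x"
  proof
    fix x assume "x \<in> vars_clause c"
    then have "\<pi> x \<in> \<pi> ` U" unfolding U_def by auto
    then show "subst_trm \<delta> (subst_trm \<theta> (\<xi> x)) = \<zeta> x"
      using \<delta>[of "\<pi> x"] inj\<pi> unfolding \<sigma>_def \<xi>_def by (simp add: inv_f_f)
  qed
  have vH': "vars_pg H' \<subseteq> V \<union> vars_clause (subst_clause \<xi> c)"
  proof -
    have "vars_pg H' \<subseteq> vars_pg (K \<union> shift_pg \<pi>0 (subst_pg \<xi> (snd c))) \<union> subst_vars \<theta>"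
      unfolding H'_def by (rule vars_pg_subst_sub)
    moreover have "vars_pg K \<subseteq> V" using V(2) fs unfolding first_split_def vars_pg_def by auto
    moreover have "vars_pg (subst_pg \<xi> (snd c)) \<subseteq> vars_clause (subst_clause \<xi> c)"
      unfolding vars_clause_def subst_clause_def by auto
    moreover have "subst_vars \<theta> \<subseteq> V \<union> vars_clause (subst_clause \<xi> c)"
      using th(3) ve unfolding relevant_def vars_clause_def subst_clause_def by auto
    ultimately show ?thesis by auto
  qed
  have fin: "finite (vars_clause (subst_clause \<xi> c))" using VC fU by simp
  have d1: "vars_clause (subst_clause \<xi> c) \<inter> V = {}" using VC \<pi>(2) by simp
  have d2: "snd c = ms c \<union> mq c" using spc cB by simp
  have d3: "pgoal (ms c)" "pgoal (mq c)" "below (ms c) (mq c)" using spc by auto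
  show ?thesis
    apply (rule exI[of _ \<xi>], rule exI[of _ \<theta>], rule exI[of _ H'], rule exI[of _ \<delta>], rule exI[of _ \<gamma>])
    using inSQ d1 fin \<gamma> dV dC vH' d2 d3 by (intro conjI) assumption+
qed

inductive just :: "('f,'v) clause set \<Rightarrow> (('f,'v) clause \<Rightarrow> ('f,'v) pgoal) \<Rightarrow> (('f,'v) clause \<Rightarrow> ('f,'v) pgoal)
    \<Rightarrow> ('f,'v) pgoal \<Rightarrow> ('f,'v) atom \<Rightarrow> rat \<Rightarrow> bool"
  for P ms mq PP where
  jprim: "(A, y) \<in> PP \<Longrightarrow> y < x \<Longrightarrow> just P ms mq PP A x"
| junf: "c \<in> P \<Longrightarrow> A = subst_atom \<zeta> (fst c) \<Longrightarrow>
    (\<forall>m\<in>ms c. just P ms mq PP (subst_atom \<zeta> (fst m)) x) \<Longrightarrow>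
    (\<forall>q\<in>mq c. \<exists>x'\<ge>x. just P ms mq PP (subst_atom \<zeta> (fst q)) x') \<Longrightarrow> just P ms mq PP A x"

lemma just_mono_aux: "just P ms mq PP A x \<Longrightarrow> \<forall>z. x \<le> z \<longrightarrow> just P ms mq PP A z"
proof (induction rule: just.induct)
  case (jprim A y x)
  then show ?case by (auto intro: just.jprim)
next
  case (junf c A \<zeta> x)
  show ?case
  proof (intro allI impI)
    fix z assume xz: "x \<le> z"
    have st: "\<forall>m\<in>ms c. just P ms mq PP (subst_atom \<zeta> (fst m)) z" using junf.IH(1) xz by blast
    have qu: "\<forall>q\<in>mq c. \<exists>x'\<ge>z. just P ms mq PP (subst_atom \<zeta> (fst q)) x'"
    proof
      fix q assume "q \<in> mq c"
      then obtain x' where "x' \<ge> x" "just P ms mq PP (subst_atom \<zeta> (fst q)) x'"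
        "\<forall>z. x' \<le> z \<longrightarrow> just P ms mq PP (subst_atom \<zeta> (fst q)) z"
        using junf.IH(2) by blast
      then show "\<exists>x'\<ge>z. just P ms mq PP (subst_atom \<zeta> (fst q)) x'"
        by (intro exI[of _ "max x' z"]) auto
    qed
    show "just P ms mq PP A z" by (rule just.junf[OF junf.hyps(1,2) st qu])
  qed
qed

lemma just_mono: "just P ms mq PP A x \<Longrightarrow> x \<le> z \<Longrightarrow> just P ms mq PP A z"
  using just_mono_aux by blast

lemma just_transfer_aux: "just P ms mq PP A x \<Longrightarrow>
   \<forall>z. (\<forall>a y. (a,y) \<in> PP \<longrightarrow> y < x \<longrightarrow> y < z) \<longrightarrow> just P ms mq PP A z"
proof (induction rule: just.induct)
  case (jprim A y x)
  then show ?case by (auto intro: just.jprim)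
next
  case (junf c A \<zeta> x)
  show ?case
  proof (intro allI impI)
    fix z assume cz: "\<forall>a y. (a,y) \<in> PP \<longrightarrow> y < x \<longrightarrow> y < z"
    have st: "\<forall>m\<in>ms c. just P ms mq PP (subst_atom \<zeta> (fst m)) z" using junf.IH(1) cz by blast
    have qu: "\<forall>q\<in>mq c. \<exists>x'\<ge>z. just P ms mq PP (subst_atom \<zeta> (fst q)) x'"
    proof
      fix q assume "q \<in> mq c"
      then obtain x' where "just P ms mq PP (subst_atom \<zeta> (fst q)) x'"
        using junf.IH(2) by blast
      then show "\<exists>x'\<ge>z. just P ms mq PP (subst_atom \<zeta> (fst q)) x'"
        by (intro exI[of _ "max x' z"]) (auto intro: just_mono)
    qed
    show "just P ms mq PP A z" by (rule just.junf[OF junf.hyps(1,2) st qu])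
  qed
qed

lemma just_transfer: "just P ms mq PP A x \<Longrightarrow>
   (\<And>a y. (a,y) \<in> PP \<Longrightarrow> y < x \<Longrightarrow> y < z) \<Longrightarrow> just P ms mq PP A z"
  using just_transfer_aux by blast

lemma just_subst_aux:
  assumes hyp: "\<And>a y x. (a,y) \<in> PP \<Longrightarrow> y < x \<Longrightarrow> L \<le> x \<Longrightarrow> just P ms mq PP' (subst_atom \<sigma> a) x"
  shows "just P ms mq PP A x \<Longrightarrow> L \<le> x \<longrightarrow> just P ms mq PP' (subst_atom \<sigma> A) x"
proof (induction rule: just.induct)
  case (jprim A y x)
  then show ?case using hyp by blast
next
  case (junf c A \<zeta> x)
  show ?case
  proof
    assume Lx: "L \<le> x"
    define \<zeta>' where "\<zeta>' = (\<lambda>v. subst_trm \<sigma> (\<zeta> v))"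
    have A': "subst_atom \<sigma> A = subst_atom \<zeta>' (fst c)" unfolding \<zeta>'_def junf.hyps(2) subst_atom_comp ..
    have st: "\<forall>m\<in>ms c. just P ms mq PP' (subst_atom \<zeta>' (fst m)) x"
      using junf.IH(1) Lx unfolding \<zeta>'_def subst_atom_comp by blast
    have qu: "\<forall>q\<in>mq c. \<exists>x'\<ge>x. just P ms mq PP' (subst_atom \<zeta>' (fst q)) x'"
    proof
      fix q assume "q \<in> mq c"
      then obtain x' where "x' \<ge> x" "L \<le> x' \<longrightarrow> just P ms mq PP' (subst_atom \<sigma> (subst_atom \<zeta> (fst q))) x'"
        using junf.IH(2) by blast
      then show "\<exists>x'\<ge>x. just P ms mq PP' (subst_atom \<zeta>' (fst q)) x'"
        using Lx unfolding \<zeta>'_def subst_atom_comp by (intro exI[of _ x']) auto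
    qed
    show "just P ms mq PP' (subst_atom \<sigma> A) x" by (rule just.junf[OF junf.hyps(1) A' st qu])
  qed
qed

lemma just_subst:
  assumes "just P ms mq PP A x" "L \<le> x"
    and "\<And>a y x. (a,y) \<in> PP \<Longrightarrow> y < x \<Longrightarrow> L \<le> x \<Longrightarrow> just P ms mq PP' (subst_atom \<sigma> a) x"
  shows "just P ms mq PP' (subst_atom \<sigma> A) x"
  using just_subst_aux[of PP L P ms mq PP' \<sigma> A x] assms by blast

definition sinv :: "('f,'v) clause set \<Rightarrow> (('f,'v) clause \<Rightarrow> ('f,'v) pgoal) \<Rightarrow> (('f,'v) clause \<Rightarrow> ('f,'v) pgoal)
    \<Rightarrow> ('f,'v) pgoal \<Rightarrow> (rat \<Rightarrow> rat) \<Rightarrow> ('f,'v) pgoal \<Rightarrow> ('f,'v) subst \<Rightarrow> bool" where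
  "sinv P ms mq N f H \<eta> \<longleftrightarrow> pgoal H \<and> (\<forall>p\<in>prios N. \<forall>q\<in>prios N. p < q \<longrightarrow> f p < f q) \<and>
     (\<forall>a p. (a,p) \<in> N \<longrightarrow> (\<exists>e. (e, f p) \<in> H \<and> subst_atom \<eta> e = a)) \<and>
     (\<forall>e y. (e,y) \<in> H \<longrightarrow> y \<notin> f ` prios N \<longrightarrow> just P ms mq (shift_pg f N) (subst_atom \<eta> e) y)"

lemma reduced_facts:
  assumes "reduced X \<alpha> G N"
  shows "\<forall>a r. (a,r) \<in> N \<longrightarrow> subst_atom \<alpha> a = a"
    and "\<forall>a r. (a,r) \<in> N \<longrightarrow> (\<exists>b. (b,r) \<in> G \<and> subst_atom \<alpha> b = a)"
    and "\<forall>b q. (b,q) \<in> G \<longrightarrow> (\<exists>a r. (a,r) \<in> N \<and> r \<le> q \<and> subst_atom \<alpha> b = a \<and> (q \<notin> prios N \<longrightarrow> r < q))"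
proof -
  obtain F and h :: nat and a p A where R: "\<forall>j<h. pgoal (A j)"
    "G = F \<union> (\<lambda>j. (a j, p j)) ` {..<h} \<union> (\<Union>j<h. A j)"
    "\<forall>j<h. \<forall>bs\<in>A j. subst_atom \<alpha> (fst bs) = a j"
    "N = F \<union> (\<lambda>j. (a j, Min (insert (p j) (prios (A j))))) ` {..<h}"
    "\<forall>x\<in>X \<union> vars_pg N. \<alpha> x = Var x"
    using assms unfolding reduced_def by blast
  define r where "r j = Min (insert (p j) (prios (A j)))" for j
  have fin: "finite (insert (p j) (prios (A j)))" if "j < h" for j
    using R(1) that unfolding pgoal_def by (auto intro: finite_prios)
  have rin: "r j \<in> insert (p j) (prios (A j))" if "j < h" for j
    unfolding r_def using fin[OF that] by (rule Min_in) auto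
  have rle: "r j \<le> q" if "j < h" "q \<in> insert (p j) (prios (A j))" for j q
    unfolding r_def using fin[OF that(1)] that(2) by (rule Min_le)
  have N: "N = F \<union> (\<lambda>j. (a j, r j)) ` {..<h}" using R(4) unfolding r_def by simp
  show fixa: "\<forall>a r. (a,r) \<in> N \<longrightarrow> subst_atom \<alpha> a = a"
  proof (intro allI impI)
    fix b s assume "(b,s) \<in> N"
    then have "vars_atom b \<subseteq> vars_pg N" by (rule vars_pg_mem)
    then show "subst_atom \<alpha> b = b" using R(5) subst_atom_cong[of b \<alpha> Var] by auto
  qed
  show "\<forall>a r. (a,r) \<in> N \<longrightarrow> (\<exists>b. (b,r) \<in> G \<and> subst_atom \<alpha> b = a)"
  proof (intro allI impI)
    fix b s assume bs: "(b,s) \<in> N"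
    show "\<exists>b'. (b',s) \<in> G \<and> subst_atom \<alpha> b' = b"
    proof (cases "(b,s) \<in> F")
      case True then show ?thesis using R(2) fixa bs by blast
    next
      case False
      then obtain j where j: "j < h" "b = a j" "s = r j" using bs N by auto
      show ?thesis
      proof (cases "r j = p j")
        case True
        then show ?thesis using R(2) fixa bs j by (intro exI[of _ b]) auto
      next
        case False
        then have "r j \<in> prios (A j)" using rin[OF j(1)] by auto
        then obtain b' where b': "(b', r j) \<in> A j" by (rule prios_memE)
        have "subst_atom \<alpha> b' = a j" using R(3) j(1) b' by fastforce
        then show ?thesis using R(2) j b' by (intro exI[of _ b']) auto
      qed
    qed
  qed
  show "\<forall>b q. (b,q) \<in> G \<longrightarrow> (\<exists>a r. (a,r) \<in> N \<and> r \<le> q \<and> subst_atom \<alpha> b = a \<and> (q \<notin> prios N \<longrightarrow> r < q))"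
  proof (intro allI impI)
    fix b q assume bq: "(b,q) \<in> G"
    consider (F) "(b,q) \<in> F" | (P) j where "j < h" "b = a j" "q = p j" | (A) j where "j < h" "(b,q) \<in> A j"
      using bq R(2) by auto
    then show "\<exists>a r. (a,r) \<in> N \<and> r \<le> q \<and> subst_atom \<alpha> b = a \<and> (q \<notin> prios N \<longrightarrow> r < q)"
    proof cases
      case F
      then have "(b,q) \<in> N" using N by auto
      then show ?thesis using fixa prios_mem by blast
    next
      case (P j)
      have inN: "(a j, r j) \<in> N" using N P by auto
      have le: "r j \<le> q" using rle[OF P(1)] P by auto
      have "q \<notin> prios N \<longrightarrow> r j < q"
        using le inN prios_mem by (metis order_le_less)
      then show ?thesis using inN le fixa P by blast
    next
      case (A j)
      have inN: "(a j, r j) \<in> N" using N A by auto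
      have le: "r j \<le> q" using rle[OF A(1)] A(2) prios_mem by blast
      have "q \<notin> prios N \<longrightarrow> r j < q"
        using le inN prios_mem by (metis order_le_less)
      moreover have "subst_atom \<alpha> b = a j" using R(3) A by force
      ultimately show ?thesis using inN le by blast
    qed
  qed
qed

lemma sinv_reduce:
  assumes I: "sinv P ms mq G f H \<eta>" and R: "reduced X \<alpha> G N"
  shows "sinv P ms mq N f H (\<lambda>x. subst_trm \<alpha> (\<eta> x))"
proof -
  note RF = reduced_facts[OF R]
  have H: "pgoal H" and mono: "\<forall>p\<in>prios G. \<forall>q\<in>prios G. p < q \<longrightarrow> f p < f q"
    and prim: "\<forall>a p. (a,p) \<in> G \<longrightarrow> (\<exists>e. (e, f p) \<in> H \<and> subst_atom \<eta> e = a)"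
    and ext: "\<forall>e y. (e,y) \<in> H \<longrightarrow> y \<notin> f ` prios G \<longrightarrow> just P ms mq (shift_pg f G) (subst_atom \<eta> e) y"
    using I unfolding sinv_def by auto
  have NG: "prios N \<subseteq> prios G"
  proof
    fix r assume "r \<in> prios N"
    then obtain a where "(a,r) \<in> N" by (rule prios_memE)
    then show "r \<in> prios G" using RF(2) prios_mem by blast
  qed
  have img: "subst_atom (\<lambda>x. subst_trm \<alpha> (\<eta> x)) e = subst_atom \<alpha> (subst_atom \<eta> e)" for e
    by (simp add: subst_atom_comp)
  have fle: "f r \<le> f q" if "r \<le> q" "r \<in> prios G" "q \<in> prios G" for r q
  proof (cases "r = q")
    case False
    then have "r < q" using that by auto
    then have "f r < f q" using mono that(2,3) by blast
    then show ?thesis by simp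
  qed simp
  have A: "\<forall>p\<in>prios N. \<forall>q\<in>prios N. p < q \<longrightarrow> f p < f q" using mono NG by blast
  have B: "\<forall>a p. (a,p) \<in> N \<longrightarrow> (\<exists>e. (e, f p) \<in> H \<and> subst_atom (\<lambda>x. subst_trm \<alpha> (\<eta> x)) e = a)"
  proof (intro allI impI)
    fix a r assume "(a,r) \<in> N"
    then obtain b where b: "(b,r) \<in> G" "subst_atom \<alpha> b = a" using RF(2) by blast
    then obtain e where "(e, f r) \<in> H" "subst_atom \<eta> e = b" using prim by blast
    then show "\<exists>e. (e, f r) \<in> H \<and> subst_atom (\<lambda>x. subst_trm \<alpha> (\<eta> x)) e = a" using b img by auto
  qed
  have C: "just P ms mq (shift_pg f N) (subst_atom (\<lambda>x. subst_trm \<alpha> (\<eta> x)) e) z"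
    if ez: "(e,z) \<in> H" "z \<notin> f ` prios N" for e z
  proof (cases "z \<in> f ` prios G")
    case True
    then obtain q where q: "q \<in> prios G" "z = f q" by auto
    then obtain b where b: "(b,q) \<in> G" by (auto elim: prios_memE)
    obtain e' where e': "(e', f q) \<in> H" "subst_atom \<eta> e' = b" using prim b by blast
    have ee: "e' = e" using pgoal_same[OF H e'(1)] ez q by auto
    have qN: "q \<notin> prios N" using ez q by auto
    obtain a r where ar: "(a,r) \<in> N" "r \<le> q" "subst_atom \<alpha> b = a" "r < q"
      using RF(3) b qN by blast
    have "(a, f r) \<in> shift_pg f N" using ar(1) by (auto simp: mem_shift_pg)
    moreover have "f r < z" using mono ar NG prios_mem q by blast
    ultimately show ?thesis using ee e' ar img by (auto intro: just.jprim)
  next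
    case False
    then have j: "just P ms mq (shift_pg f G) (subst_atom \<eta> e) z" using ext ez by blast
    have "just P ms mq (shift_pg f N) (subst_atom \<alpha> (subst_atom \<eta> e)) z"
    proof (rule just_subst[OF j order_refl])
      fix a y x assume ay: "(a,y) \<in> shift_pg f G" "y < x"
      then obtain q where q: "(a,q) \<in> G" "y = f q" by (auto simp: mem_shift_pg)
      obtain a' r where ar: "(a',r) \<in> N" "r \<le> q" "subst_atom \<alpha> a = a'" using RF(3) q by blast
      have "f r \<le> f q" using fle ar NG prios_mem q by blast
      moreover have "(a', f r) \<in> shift_pg f N" using ar by (auto simp: mem_shift_pg)
      ultimately show "just P ms mq (shift_pg f N) (subst_atom \<alpha> a) x"
        using ay q ar by (auto intro: just.jprim)
    qed
    then show ?thesis using img by simp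
  qed
  show ?thesis unfolding sinv_def using H A B C by blast
qed

lemma pgoal_subst: "pgoal G \<Longrightarrow> pgoal (subst_pg \<sigma> G)"
  unfolding pgoal_def subst_pg_def inj_on_def by (auto simp: case_prod_beta)

lemma pgoal_shift: "inj \<pi> \<Longrightarrow> pgoal G \<Longrightarrow> pgoal (shift_pg \<pi> G)"
  unfolding pgoal_def shift_pg_def inj_on_def by (auto simp: case_prod_beta)

lemma pgoal_union: "pgoal A \<Longrightarrow> pgoal B \<Longrightarrow> prios A \<inter> prios B = {} \<Longrightarrow> pgoal (A \<union> B)"
  unfolding pgoal_def inj_on_def prios_def by (auto simp: image_iff)

lemma below_disj: "below A B \<Longrightarrow> prios A \<inter> prios B = {}"
  unfolding below_def by fastforce

lemma pgoal_subset: "pgoal A \<Longrightarrow> B \<subseteq> A \<Longrightarrow> pgoal B"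
  unfolding pgoal_def by (auto intro: finite_subset inj_on_subset)

lemma shifting_inj: "shifting \<gamma> \<Longrightarrow> inj \<gamma>"
  unfolding shifting_def bij_def by auto

lemma shifting_inv: "shifting \<gamma> \<Longrightarrow> inv \<gamma> (\<gamma> s) = s"
  using shifting_inj inv_f_f by metis

lemma shifting_less: "shifting \<gamma> \<Longrightarrow> (\<gamma> s < \<gamma> t) = (s < t)"
  unfolding shifting_def by (simp add: strict_mono_less)

lemma sq_mem:
  "(b,q) \<in> subst_pg \<theta> (shift_pg \<gamma> (subst_pg \<xi> Ms) \<union> K \<union> shift_pg \<gamma> (subst_pg \<xi> Mq)) \<longleftrightarrow>
   (\<exists>b0. (b0,q) \<in> K \<and> b = subst_atom \<theta> b0) \<or>
   (\<exists>m s. (m,s) \<in> Ms \<and> q = \<gamma> s \<and> b = subst_atom \<theta> (subst_atom \<xi> m)) \<or>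
   (\<exists>m s. (m,s) \<in> Mq \<and> q = \<gamma> s \<and> b = subst_atom \<theta> (subst_atom \<xi> m))"
  unfolding subst_pg_union mem_subst_pg Un_iff mem_shift_pg by blast

lemma sq_prios:
  "prios (subst_pg \<theta> (shift_pg \<gamma> (subst_pg \<xi> Ms) \<union> K \<union> shift_pg \<gamma> (subst_pg \<xi> Mq))) =
   \<gamma> ` prios Ms \<union> prios K \<union> \<gamma> ` prios Mq"
  by simp

lemma sq_pgoal:
  assumes "pgoal Ms" "pgoal Mq" "pgoal K" "shifting \<gamma>"
    "below (shift_pg \<gamma> (subst_pg \<xi> Ms)) K" "below K (shift_pg \<gamma> (subst_pg \<xi> Mq))"
    "below (shift_pg \<gamma> (subst_pg \<xi> Ms)) (shift_pg \<gamma> (subst_pg \<xi> Mq))"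
  shows "pgoal (subst_pg \<theta> (shift_pg \<gamma> (subst_pg \<xi> Ms) \<union> K \<union> shift_pg \<gamma> (subst_pg \<xi> Mq)))"
proof -
  have a: "pgoal (shift_pg \<gamma> (subst_pg \<xi> Ms))" "pgoal (shift_pg \<gamma> (subst_pg \<xi> Mq))"
    using assms pgoal_shift pgoal_subst shifting_inj by blast+
  have "pgoal (shift_pg \<gamma> (subst_pg \<xi> Ms) \<union> K)"
    using pgoal_union[OF a(1) assms(3) below_disj[OF assms(5)]] .
  moreover have "prios (shift_pg \<gamma> (subst_pg \<xi> Ms) \<union> K) \<inter> prios (shift_pg \<gamma> (subst_pg \<xi> Mq)) = {}"
    using below_disj[OF assms(6)] below_disj[OF assms(7)] by auto
  ultimately show ?thesis using pgoal_union a(2) pgoal_subst by blast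
qed

inductive sldseg :: "('f,'v) step set \<Rightarrow> ('f,'v) clause set \<Rightarrow> 'v set \<Rightarrow> ('f,'v) pgoal
    \<Rightarrow> ('f,'v) clause list \<Rightarrow> 'v set \<Rightarrow> ('f,'v) pgoal \<Rightarrow> bool" for SQ P where
  sref: "sldseg SQ P V H [] V H"
| sstep: "(H, c, \<xi>, \<theta>, H1) \<in> SQ \<Longrightarrow> c \<in> P \<Longrightarrow> vars_clause (subst_clause \<xi> c) \<inter> V = {} \<Longrightarrow>
    sldseg SQ P (V \<union> vars_clause (subst_clause \<xi> c)) H1 Z V' H' \<Longrightarrow> sldseg SQ P V H (c # Z) V' H'"

lemma sldseg_trans: "sldseg SQ P V H Z1 V1 H1 \<Longrightarrow> sldseg SQ P V1 H1 Z2 V2 H2 \<Longrightarrow> sldseg SQ P V H (Z1 @ Z2) V2 H2"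
  by (induction rule: sldseg.induct) (auto intro: sldseg.sstep)

lemma sldseg_one: "(H, c, \<xi>, \<theta>, H1) \<in> SQ \<Longrightarrow> c \<in> P \<Longrightarrow> vars_clause (subst_clause \<xi> c) \<inter> V = {} \<Longrightarrow>
    sldseg SQ P V H [c] (V \<union> vars_clause (subst_clause \<xi> c)) H1"
  by (auto intro: sldseg.intros)

lemma sldseg_mono: "sldseg SQ P V H Z V' H' \<Longrightarrow> V \<subseteq> V'"
  by (induction rule: sldseg.induct) auto

lemma sqsplit_D0:
  assumes "sqsplit SQ ms mq" "valid_clause c"
  shows "pgoal (ms c) \<and> pgoal (mq c) \<and> below (ms c) (mq c) \<and> snd c = ms c \<union> mq c"
proof -
  obtain h B where "c = (h,B)" by fastforce
  then show ?thesis using assms unfolding sqsplit_def by auto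
qed

lemma sqsplit_D:
  assumes "sqsplit SQ ms mq" "valid_clause c" "(G, c, \<xi>, \<mu>, R) \<in> SQ" "first_split G a p K"
  shows "\<exists>\<gamma>. shifting \<gamma> \<and>
                    below (shift_pg \<gamma> (subst_pg \<xi> (ms c))) K \<and>
                    below K (shift_pg \<gamma> (subst_pg \<xi> (mq c))) \<and>
                    below (shift_pg \<gamma> (subst_pg \<xi> (ms c))) (shift_pg \<gamma> (subst_pg \<xi> (mq c))) \<and>
                    R = subst_pg \<mu> (shift_pg \<gamma> (subst_pg \<xi> (ms c)) \<union> K \<union>
                                     shift_pg \<gamma> (subst_pg \<xi> (mq c)))"
proof -
  obtain h B where "c = (h,B)" by fastforce
  then show ?thesis using assms unfolding sqsplit_def by blast
qed

lemma below_D: "below A B \<Longrightarrow> p \<in> prios A \<Longrightarrow> q \<in> prios B \<Longrightarrow> p < q"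
  unfolding below_def by auto

lemma clause_atom_vars: "(m,s) \<in> snd c \<Longrightarrow> vars_atom m \<subseteq> vars_clause c"
  unfolding vars_clause_def using vars_pg_mem by fastforce

lemma tstep:
  fixes N :: "('f,'v) pgoal"
  assumes inf: "infinite (UNIV :: 'v set)" and cs: "complete_steps SQ" and sp: "sqsplit SQ ms mq"
    and P: "program P" and c: "c \<in> P"
    and I: "sinv P ms mq N f H \<eta>"
    and fsN: "first_split N a p KN"
    and front: "\<forall>q\<in>prios H. f p \<le> q"
    and rs: "(N, c, \<xi>, \<theta>, G') \<in> SQ"
    and V: "finite V" "vars_pg H \<subseteq> V"
  shows "\<exists>\<xi>' \<theta>' H' \<eta>' f'. (H, c, \<xi>', \<theta>', H') \<in> SQ \<and> vars_clause (subst_clause \<xi>' c) \<inter> V = {} \<and>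
     finite (vars_clause (subst_clause \<xi>' c)) \<and> vars_pg H' \<subseteq> V \<union> vars_clause (subst_clause \<xi>' c) \<and>
     sinv P ms mq G' f' H' \<eta>'"
proof -
  have H: "pgoal H" and mono: "\<forall>p\<in>prios N. \<forall>q\<in>prios N. p < q \<longrightarrow> f p < f q"
    and prim: "\<forall>a p. (a,p) \<in> N \<longrightarrow> (\<exists>e. (e, f p) \<in> H \<and> subst_atom \<eta> e = a)"
    and ext: "\<forall>e y. (e,y) \<in> H \<longrightarrow> y \<notin> f ` prios N \<longrightarrow> just P ms mq (shift_pg f N) (subst_atom \<eta> e) y"
    using I unfolding sinv_def by auto
  have apN: "(a,p) \<in> N" using fsN unfolding first_split_def by auto
  obtain e where e: "(e, f p) \<in> H" "subst_atom \<eta> e = a" using prim apN by blast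
  define KH where "KH = H - {(e, f p)}"
  have fsH: "first_split H e (f p) KH"
    unfolding KH_def using H e(1) front by (intro first_split_exists) (auto simp: pgoal_def)
  have valid: "valid_clause c" using P c unfolding program_def by auto
  have "is_step (N, c, \<xi>, \<theta>, G')" using cs rs unfolding complete_steps_def by blast
  then obtain \<pi> where "pstep N c \<xi> \<theta> \<pi> G'" by auto
  then obtain a0 p0 F0 where "first_split N a0 p0 F0" "is_mgu \<theta> a0 (subst_atom \<xi> (fst c))"
    unfolding pstep_def by blast
  then have "is_mgu \<theta> a (subst_atom \<xi> (fst c))" using first_split_unique[OF fsN] by blast
  then have unif: "subst_atom \<theta> a = subst_atom \<theta> (subst_atom \<xi> (fst c))"
    unfolding is_mgu_def unifier_def by auto
  obtain \<gamma> where \<gamma>: "shifting \<gamma>" "below (shift_pg \<gamma> (subst_pg \<xi> (ms c))) KN"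
    "below KN (shift_pg \<gamma> (subst_pg \<xi> (mq c)))"
    "below (shift_pg \<gamma> (subst_pg \<xi> (ms c))) (shift_pg \<gamma> (subst_pg \<xi> (mq c)))"
    "G' = subst_pg \<theta> (shift_pg \<gamma> (subst_pg \<xi> (ms c)) \<union> KN \<union> shift_pg \<gamma> (subst_pg \<xi> (mq c)))"
    using sqsplit_D[OF sp valid rs fsN] by blast
  define \<zeta> where "\<zeta> = (\<lambda>v. subst_trm \<theta> (\<xi> v))"
  have eq: "subst_atom \<theta> (subst_atom \<eta> e) = subst_atom \<zeta> (fst c)"
    using e unif by (simp add: \<zeta>_def subst_atom_comp)
  obtain \<xi>' \<theta>' H' \<delta> \<gamma>' where S: "(H, c, \<xi>', \<theta>', H') \<in> SQ" "vars_clause (subst_clause \<xi>' c) \<inter> V = {}"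
     "finite (vars_clause (subst_clause \<xi>' c))" "shifting \<gamma>'"
     "below (shift_pg \<gamma>' (subst_pg \<xi>' (ms c))) KH" "below KH (shift_pg \<gamma>' (subst_pg \<xi>' (mq c)))"
     "below (shift_pg \<gamma>' (subst_pg \<xi>' (ms c))) (shift_pg \<gamma>' (subst_pg \<xi>' (mq c)))"
     "H' = subst_pg \<theta>' (shift_pg \<gamma>' (subst_pg \<xi>' (ms c)) \<union> KH \<union> shift_pg \<gamma>' (subst_pg \<xi>' (mq c)))"
     "\<forall>x\<in>V. subst_trm \<delta> (\<theta>' x) = subst_trm \<theta> (\<eta> x)"
     "\<forall>x\<in>vars_clause c. subst_trm \<delta> (subst_trm \<theta>' (\<xi>' x)) = \<zeta> x"
     "vars_pg H' \<subseteq> V \<union> vars_clause (subst_clause \<xi>' c)"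
     "pgoal (ms c)" "pgoal (mq c)" "snd c = ms c \<union> mq c" "below (ms c) (mq c)"
    using sld_step[OF inf cs sp P c H fsH V eq] by blast
  define f' where "f' q = (if q \<in> prios KN then f q else \<gamma>' (inv \<gamma> q))" for q
  have KNN: "KN \<subseteq> N" using fsN unfolding first_split_def by auto
  have pKN: "q \<in> prios KN \<Longrightarrow> p < q" for q using fsN unfolding first_split_def by auto
  have KHH: "KH \<subseteq> H" unfolding KH_def by auto
  have fKH: "f q \<in> prios KH" if qk: "q \<in> prios KN" for q
  proof -
    obtain b where b: "(b,q) \<in> KN" using qk by (rule prios_memE)
    then obtain e0 where e0: "(e0, f q) \<in> H" using prim KNN by blast
    have "f p < f q" using mono pKN[OF qk] prios_mem[OF apN] prios_mem[of b q N] b KNN by blast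
    then have "(e0, f q) \<in> KH" using e0 unfolding KH_def by auto
    then show ?thesis by (rule prios_mem)
  qed
  have pKNN: "prios KN \<subseteq> prios N" using KNN unfolding prios_def by auto
  have fne: "f p < f q" if qk: "q \<in> prios KN" for q
    using mono pKN[OF qk] prios_mem[OF apN] pKNN qk by blast
  have f'KN: "q \<in> prios KN \<Longrightarrow> f' q = f q" for q unfolding f'_def by simp
  have f'B: "s \<in> prios (snd c) \<Longrightarrow> f' (\<gamma> s) = \<gamma>' s" for s
  proof -
    assume s: "s \<in> prios (snd c)"
    have "\<gamma> s \<notin> prios KN"
    proof
      assume k: "\<gamma> s \<in> prios KN"
      show False
      proof (cases "s \<in> prios (ms c)")
        case True
        then have "\<gamma> s < \<gamma> s" using below_D[OF \<gamma>(2) _ k] by auto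
        then show False by simp
      next
        case False
        then have "s \<in> prios (mq c)" using s S(14) by auto
        then have "\<gamma> s < \<gamma> s" using below_D[OF \<gamma>(3) k] by auto
        then show False by simp
      qed
    qed
    then show ?thesis unfolding f'_def using shifting_inv[OF \<gamma>(1)] by simp
  qed
  have pH': "pgoal H'" unfolding S(8)
    by (rule sq_pgoal[OF S(12,13) pgoal_subset[OF H KHH] S(4,5,6,7)])
  have G'p: "prios G' = \<gamma> ` prios (ms c) \<union> prios KN \<union> \<gamma> ` prios (mq c)" unfolding \<gamma>(5) by simp
  have msc: "s \<in> prios (ms c) \<Longrightarrow> s \<in> prios (snd c)" for s using S(14) by simp
  have mqc: "s \<in> prios (mq c) \<Longrightarrow> s \<in> prios (snd c)" for s using S(14) by simp
  have mono': "\<forall>p\<in>prios G'. \<forall>q\<in>prios G'. p < q \<longrightarrow> f' p < f' q"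
  proof (intro ballI impI)
    fix q1 q2 assume q: "q1 \<in> prios G'" "q2 \<in> prios G'" "q1 < q2"
    have KNmono: "f q1 < f q2" if "q1 \<in> prios KN" "q2 \<in> prios KN"
      using mono that q(3) pKNN by blast
    consider (KK) "q1 \<in> prios KN" "q2 \<in> prios KN"
      | (BB) s1 s2 where "q1 = \<gamma> s1" "q2 = \<gamma> s2" "s1 \<in> prios (snd c)" "s2 \<in> prios (snd c)"
      | (KB) s2 where "q1 \<in> prios KN" "q2 = \<gamma> s2" "s2 \<in> prios (snd c)"
      | (BK) s1 where "q1 = \<gamma> s1" "s1 \<in> prios (snd c)" "q2 \<in> prios KN"
      using q(1,2) G'p msc mqc by blast
    then show "f' q1 < f' q2"
    proof cases
      case KK then show ?thesis using KNmono f'KN by simp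
    next
      case (BB s1 s2)
      then have "s1 < s2" using q(3) shifting_less[OF \<gamma>(1)] by simp
      then show ?thesis using BB f'B shifting_less[OF S(4)] by simp
    next
      case (KB s2)
      have "s2 \<in> prios (mq c)"
      proof (rule ccontr)
        assume "s2 \<notin> prios (mq c)"
        then have "s2 \<in> prios (ms c)" using KB S(14) by auto
        then have "q2 < q1" using below_D[OF \<gamma>(2) _ KB(1)] KB by auto
        then show False using q(3) by simp
      qed
      then have "f q1 < \<gamma>' s2" using below_D[OF S(6) fKH[OF KB(1)]] by auto
      then show ?thesis using KB f'KN f'B by simp
    next
      case (BK s1)
      have "s1 \<in> prios (ms c)"
      proof (rule ccontr)
        assume "s1 \<notin> prios (ms c)"
        then have "s1 \<in> prios (mq c)" using BK S(14) by auto
        then have "q2 < q1" using below_D[OF \<gamma>(3) BK(3)] BK by auto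
        then show False using q(3) by simp
      qed
      then have "\<gamma>' s1 < f q2" using below_D[OF S(5) _ fKH[OF BK(3)]] by auto
      then show ?thesis using BK f'KN f'B by simp
    qed
  qed
  have eV: "vars_atom e0 \<subseteq> V" if "(e0, y) \<in> H" for e0 y using that V(2) vars_pg_mem by blast
  have imgK: "subst_atom \<delta> (subst_atom \<theta>' e0) = subst_atom \<theta> (subst_atom \<eta> e0)" if "(e0, y) \<in> H" for e0 y
  proof -
    have "subst_atom \<delta> (subst_atom \<theta>' e0) = subst_atom (\<lambda>x. subst_trm \<theta> (\<eta> x)) e0"
      unfolding subst_atom_comp by (rule subst_atom_cong) (use S(9) eV[OF that] in auto)
    then show ?thesis by (simp add: subst_atom_comp)
  qed
  have imgB: "subst_atom \<delta> (subst_atom \<theta>' (subst_atom \<xi>' m)) = subst_atom \<theta> (subst_atom \<xi> m)"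
    if "(m, s) \<in> snd c" for m s
  proof -
    have "subst_atom \<delta> (subst_atom \<theta>' (subst_atom \<xi>' m)) = subst_atom \<zeta> m"
      unfolding subst_atom_comp by (rule subst_atom_cong) (use S(10) clause_atom_vars[OF that] in \<open>auto simp: subst_trm_comp[symmetric]\<close>)
    then show ?thesis by (simp add: \<zeta>_def subst_atom_comp)
  qed
  have prim': "\<forall>b q. (b,q) \<in> G' \<longrightarrow> (\<exists>e. (e, f' q) \<in> H' \<and> subst_atom \<delta> e = b)"
  proof (intro allI impI)
    fix b q assume "(b,q) \<in> G'"
    then consider (K) b0 where "(b0,q) \<in> KN" "b = subst_atom \<theta> b0"
      | (CS) m s where "(m,s) \<in> ms c" "q = \<gamma> s" "b = subst_atom \<theta> (subst_atom \<xi> m)"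
      | (CQ) m s where "(m,s) \<in> mq c" "q = \<gamma> s" "b = subst_atom \<theta> (subst_atom \<xi> m)"
      unfolding \<gamma>(5) sq_mem by blast
    then show "\<exists>e. (e, f' q) \<in> H' \<and> subst_atom \<delta> e = b"
    proof cases
      case (K b0)
      obtain e0 where e0: "(e0, f q) \<in> H" "subst_atom \<eta> e0 = b0" using prim K KNN by blast
      have qK: "q \<in> prios KN" using K prios_mem by blast
      have "(e0, f q) \<in> KH" using e0 fne[OF qK] unfolding KH_def by auto
      then have "(subst_atom \<theta>' e0, f q) \<in> H'" unfolding S(8) sq_mem by blast
      then show ?thesis using imgK[OF e0(1)] e0 K f'KN[OF qK] by auto
    next
      case (CS m s)
      have "(subst_atom \<theta>' (subst_atom \<xi>' m), \<gamma>' s) \<in> H'" unfolding S(8) sq_mem using CS by blast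
      moreover have "(m,s) \<in> snd c" using CS S(14) by auto
      ultimately show ?thesis using imgB f'B prios_mem CS by metis
    next
      case (CQ m s)
      have "(subst_atom \<theta>' (subst_atom \<xi>' m), \<gamma>' s) \<in> H'" unfolding S(8) sq_mem using CQ by blast
      moreover have "(m,s) \<in> snd c" using CQ S(14) by auto
      ultimately show ?thesis using imgB f'B prios_mem CQ by metis
    qed
  qed
  have ext': "\<forall>x z. (x,z) \<in> H' \<longrightarrow> z \<notin> f' ` prios G' \<longrightarrow> just P ms mq (shift_pg f' G') (subst_atom \<delta> x) z"
  proof (intro allI impI)
    fix x z assume xz: "(x,z) \<in> H'" "z \<notin> f' ` prios G'"
    have "\<not> (\<exists>m s. (m,s) \<in> ms c \<and> z = \<gamma>' s)"
    proof
      assume "\<exists>m s. (m,s) \<in> ms c \<and> z = \<gamma>' s"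
      then obtain m s where ms: "(m,s) \<in> ms c" "z = \<gamma>' s" by blast
      then have "\<gamma> s \<in> prios G'" using G'p prios_mem by blast
      moreover have "f' (\<gamma> s) = z" using f'B ms S(14) prios_mem by (metis UnI1)
      ultimately show False using xz(2) by blast
    qed
    moreover have "\<not> (\<exists>m s. (m,s) \<in> mq c \<and> z = \<gamma>' s)"
    proof
      assume "\<exists>m s. (m,s) \<in> mq c \<and> z = \<gamma>' s"
      then obtain m s where ms: "(m,s) \<in> mq c" "z = \<gamma>' s" by blast
      then have "\<gamma> s \<in> prios G'" using G'p prios_mem by blast
      moreover have "f' (\<gamma> s) = z" using f'B ms S(14) prios_mem by (metis UnI2)
      ultimately show False using xz(2) by blast
    qed
    ultimately obtain e0 where e0: "(e0, z) \<in> KH" "x = subst_atom \<theta>' e0"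
      using xz(1) unfolding S(8) sq_mem by blast
    have e0H: "(e0, z) \<in> H" using e0 KHH by auto
    have zKH: "z \<in> prios KH" using e0 prios_mem by blast
    have zfp: "z \<noteq> f p" using e0(1) fsH unfolding first_split_def by (auto dest: prios_mem)
    have "z \<notin> f ` prios KN"
    proof
      assume "z \<in> f ` prios KN"
      then obtain q where q: "q \<in> prios KN" "z = f q" by auto
      then have "z = f' q" "q \<in> prios G'" using f'KN G'p by auto
      then show False using xz(2) by blast
    qed
    then have "z \<notin> f ` prios N" using zfp fsN unfolding first_split_def by auto
    then have j: "just P ms mq (shift_pg f N) (subst_atom \<eta> e0) z" using ext e0H by blast
    have "just P ms mq (shift_pg f' G') (subst_atom \<theta> (subst_atom \<eta> e0)) z"
    proof (rule just_subst[OF j order_refl])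
      fix a1 y x assume a1: "(a1,y) \<in> shift_pg f N" "y < x" "z \<le> x"
      then obtain q where q: "(a1,q) \<in> N" "y = f q" by (auto simp: mem_shift_pg)
      show "just P ms mq (shift_pg f' G') (subst_atom \<theta> a1) x"
      proof (cases "(a1,q) \<in> KN")
        case True
        have "(subst_atom \<theta> a1, q) \<in> G'" unfolding \<gamma>(5) sq_mem using True by blast
        then have "(subst_atom \<theta> a1, f' q) \<in> shift_pg f' G'" by (auto simp: mem_shift_pg)
        moreover have "f' q = y" using q f'KN True prios_mem by metis
        ultimately show ?thesis using a1 by (auto intro: just.jprim)
      next
        case False
        then have aq: "a1 = a" "q = p" using q fsN unfolding first_split_def by auto
        have A: "subst_atom \<theta> a1 = subst_atom \<zeta> (fst c)"
          using aq unif by (simp add: \<zeta>_def subst_atom_comp)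
        show ?thesis
        proof (rule just.junf[OF c A])
          show "\<forall>m\<in>ms c. just P ms mq (shift_pg f' G') (subst_atom \<zeta> (fst m)) x"
          proof
            fix m assume m: "m \<in> ms c"
            obtain m0 s where ms: "m = (m0, s)" by fastforce
            have "(subst_atom \<theta> (subst_atom \<xi> m0), \<gamma> s) \<in> G'" unfolding \<gamma>(5) sq_mem using m ms by blast
            then have "(subst_atom \<zeta> m0, f' (\<gamma> s)) \<in> shift_pg f' G'"
              by (auto simp: mem_shift_pg \<zeta>_def subst_atom_comp)
            moreover have "f' (\<gamma> s) = \<gamma>' s" using f'B m ms S(14) prios_mem by (metis UnI1)
            moreover have "\<gamma>' s < z"
            proof -
              have "s \<in> prios (ms c)" using m ms prios_mem by blast
              then have "\<gamma>' s \<in> prios (shift_pg \<gamma>' (subst_pg \<xi>' (ms c)))" by simp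
              then show ?thesis using below_D[OF S(5) _ zKH] by blast
            qed
            ultimately show "just P ms mq (shift_pg f' G') (subst_atom \<zeta> (fst m)) x"
              using ms a1(3) by (auto intro: just.jprim)
          qed
          show "\<forall>q\<in>mq c. \<exists>x'\<ge>x. just P ms mq (shift_pg f' G') (subst_atom \<zeta> (fst q)) x'"
          proof
            fix m assume m: "m \<in> mq c"
            obtain m0 s where ms: "m = (m0, s)" by fastforce
            have "(subst_atom \<theta> (subst_atom \<xi> m0), \<gamma> s) \<in> G'" unfolding \<gamma>(5) sq_mem using m ms by blast
            then have "(subst_atom \<zeta> m0, f' (\<gamma> s)) \<in> shift_pg f' G'"
              by (auto simp: mem_shift_pg \<zeta>_def subst_atom_comp)
            then have "just P ms mq (shift_pg f' G') (subst_atom \<zeta> m0) (max x (f' (\<gamma> s) + 1))"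
              by (rule just.jprim) auto
            then show "\<exists>x'\<ge>x. just P ms mq (shift_pg f' G') (subst_atom \<zeta> (fst m)) x'"
              using ms by (intro exI[of _ "max x (f' (\<gamma> s) + 1)"]) auto
          qed
        qed
      qed
    qed
    then show "just P ms mq (shift_pg f' G') (subst_atom \<delta> x) z"
      using imgK[OF e0H] e0(2) by simp
  qed
  have "sinv P ms mq G' f' H' \<delta>" unfolding sinv_def using pH' mono' prim' ext' by blast
  then show ?thesis using S(1,2,3,11) by blast
qed

definition Lgood :: "('f,'v) step set \<Rightarrow> ('f,'v) clause set \<Rightarrow> (('f,'v) clause \<Rightarrow> ('f,'v) pgoal) \<Rightarrow> (('f,'v) clause \<Rightarrow> ('f,'v) pgoal)
   \<Rightarrow> ('f,'v) pgoal \<Rightarrow> (rat \<Rightarrow> rat) \<Rightarrow> ('f,'v) atom \<Rightarrow> bool" where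
  "Lgood SQ P ms mq N f A \<longleftrightarrow> (\<forall>H \<eta> V eo yo. sinv P ms mq N f H \<eta> \<longrightarrow> (eo,yo) \<in> H \<longrightarrow> yo \<notin> f ` prios N \<longrightarrow>
     (\<forall>q\<in>prios H. yo \<le> q) \<longrightarrow> subst_atom \<eta> eo = A \<longrightarrow> finite V \<longrightarrow> vars_pg H \<subseteq> V \<longrightarrow>
     (\<exists>Z V' H' \<eta>'. sldseg SQ P V H Z V' H' \<and> sinv P ms mq N f H' \<eta>' \<and> finite V' \<and> vars_pg H' \<subseteq> V' \<and>
        (\<exists>Qs. prios H' = (prios H - {yo}) \<union> Qs \<and> (\<forall>q\<in>Qs. \<forall>r\<in>prios H - {yo}. r < q)) \<and>
        (\<forall>e y. (e,y) \<in> H \<longrightarrow> y \<noteq> yo \<longrightarrow> (\<exists>e'. (e',y) \<in> H' \<and> subst_atom \<eta>' e' = subst_atom \<eta> e))))"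

lemma LgoodD:
  assumes L: "Lgood SQ P ms mq N f A" and a: "sinv P ms mq N f H \<eta>" "(eo,yo) \<in> H" "yo \<notin> f ` prios N"
     "\<forall>q\<in>prios H. yo \<le> q" "subst_atom \<eta> eo = A" "finite V" "vars_pg H \<subseteq> V"
  shows "\<exists>Z V' H' \<eta>'. sldseg SQ P V H Z V' H' \<and> sinv P ms mq N f H' \<eta>' \<and> finite V' \<and> vars_pg H' \<subseteq> V' \<and>
        (\<exists>Qs. prios H' = (prios H - {yo}) \<union> Qs \<and> (\<forall>q\<in>Qs. \<forall>r\<in>prios H - {yo}. r < q)) \<and>
        (\<forall>e y. (e,y) \<in> H \<longrightarrow> y \<noteq> yo \<longrightarrow> (\<exists>e'. (e',y) \<in> H' \<and> subst_atom \<eta>' e' = subst_atom \<eta> e))"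
proof -
  have "\<forall>H \<eta> V eo yo. sinv P ms mq N f H \<eta> \<longrightarrow> (eo,yo) \<in> H \<longrightarrow> yo \<notin> f ` prios N \<longrightarrow>
     (\<forall>q\<in>prios H. yo \<le> q) \<longrightarrow> subst_atom \<eta> eo = A \<longrightarrow> finite V \<longrightarrow> vars_pg H \<subseteq> V \<longrightarrow>
     (\<exists>Z V' H' \<eta>'. sldseg SQ P V H Z V' H' \<and> sinv P ms mq N f H' \<eta>' \<and> finite V' \<and> vars_pg H' \<subseteq> V' \<and>
        (\<exists>Qs. prios H' = (prios H - {yo}) \<union> Qs \<and> (\<forall>q\<in>Qs. \<forall>r\<in>prios H - {yo}. r < q)) \<and>
        (\<forall>e y. (e,y) \<in> H \<longrightarrow> y \<noteq> yo \<longrightarrow> (\<exists>e'. (e',y) \<in> H' \<and> subst_atom \<eta>' e' = subst_atom \<eta> e)))"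
    using L unfolding Lgood_def .
  then have "sinv P ms mq N f H \<eta> \<longrightarrow> (eo,yo) \<in> H \<longrightarrow> yo \<notin> f ` prios N \<longrightarrow>
     (\<forall>q\<in>prios H. yo \<le> q) \<longrightarrow> subst_atom \<eta> eo = A \<longrightarrow> finite V \<longrightarrow> vars_pg H \<subseteq> V \<longrightarrow>
     (\<exists>Z V' H' \<eta>'. sldseg SQ P V H Z V' H' \<and> sinv P ms mq N f H' \<eta>' \<and> finite V' \<and> vars_pg H' \<subseteq> V' \<and>
        (\<exists>Qs. prios H' = (prios H - {yo}) \<union> Qs \<and> (\<forall>q\<in>Qs. \<forall>r\<in>prios H - {yo}. r < q)) \<and>
        (\<forall>e y. (e,y) \<in> H \<longrightarrow> y \<noteq> yo \<longrightarrow> (\<exists>e'. (e',y) \<in> H' \<and> subst_atom \<eta>' e' = subst_atom \<eta> e)))"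
    by (elim allE)
  then show ?thesis using a by (elim impE) assumption+
qed

lemma stack_process:
  assumes IHs: "\<forall>m\<in>ms c. Lgood SQ P ms mq N f (subst_atom \<zeta> (fst m))"
  shows "\<forall>S H \<eta> V. card S = n \<longrightarrow> finite S \<longrightarrow> S \<subseteq> prios H \<longrightarrow> (\<forall>s\<in>S. \<forall>r\<in>prios H - S. s < r) \<longrightarrow>
     (\<forall>s\<in>S. \<exists>e m. (e,s) \<in> H \<and> m \<in> ms c \<and> subst_atom \<eta> e = subst_atom \<zeta> (fst m)) \<longrightarrow>
     sinv P ms mq N f H \<eta> \<longrightarrow> S \<inter> f ` prios N = {} \<longrightarrow> finite V \<longrightarrow> vars_pg H \<subseteq> V \<longrightarrow>
     (\<exists>Z V' H' \<eta>'. sldseg SQ P V H Z V' H' \<and> sinv P ms mq N f H' \<eta>' \<and> finite V' \<and> vars_pg H' \<subseteq> V' \<and>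
        (\<exists>Qs. prios H' = (prios H - S) \<union> Qs \<and> (\<forall>q\<in>Qs. \<forall>r\<in>prios H - S. r < q)) \<and>
        (\<forall>e y. (e,y) \<in> H \<longrightarrow> y \<notin> S \<longrightarrow> (\<exists>e'. (e',y) \<in> H' \<and> subst_atom \<eta>' e' = subst_atom \<eta> e)))"
proof (induction n)
  case 0
  show ?case
  proof (intro allI impI)
    fix S :: "rat set" and H \<eta> V assume a: "card S = 0" "finite S" "finite V" "vars_pg H \<subseteq> V" "sinv P ms mq N f H \<eta>"
    then have "S = {}" by simp
    then show "\<exists>Z V' H' \<eta>'. sldseg SQ P V H Z V' H' \<and> sinv P ms mq N f H' \<eta>' \<and> finite V' \<and> vars_pg H' \<subseteq> V' \<and>
        (\<exists>Qs. prios H' = (prios H - S) \<union> Qs \<and> (\<forall>q\<in>Qs. \<forall>r\<in>prios H - S. r < q)) \<and>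
        (\<forall>e y. (e,y) \<in> H \<longrightarrow> y \<notin> S \<longrightarrow> (\<exists>e'. (e',y) \<in> H' \<and> subst_atom \<eta>' e' = subst_atom \<eta> e))"
      using a by (intro exI[of _ "[]"] exI[of _ V] exI[of _ H] exI[of _ \<eta>]) (auto intro: sldseg.sref)
  qed
next
  case (Suc k)
  show ?case
  proof (intro allI impI)
    fix S :: "rat set" and H \<eta> V
    assume cS: "card S = Suc k" and fS: "finite S" and SH: "S \<subseteq> prios H"
      and Sbelow: "\<forall>s\<in>S. \<forall>r\<in>prios H - S. s < r"
      and Simg: "\<forall>s\<in>S. \<exists>e m. (e,s) \<in> H \<and> m \<in> ms c \<and> subst_atom \<eta> e = subst_atom \<zeta> (fst m)"
      and I: "sinv P ms mq N f H \<eta>" and Sf: "S \<inter> f ` prios N = {}" and fV: "finite V" and vH: "vars_pg H \<subseteq> V"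
    have Sne: "S \<noteq> {}" using cS by auto
    define s where "s = Min S"
    have sS: "s \<in> S" unfolding s_def using fS Sne by simp
    obtain e m where em: "(e,s) \<in> H" "m \<in> ms c" "subst_atom \<eta> e = subst_atom \<zeta> (fst m)" using Simg sS by blast
    have smin: "\<forall>q\<in>prios H. s \<le> q"
    proof
      fix q assume q: "q \<in> prios H"
      show "s \<le> q"
      proof (cases "q \<in> S")
        case True then show ?thesis unfolding s_def using fS by simp
      next
        case False
        then have "q \<in> prios H - S" using q by simp
        then have "s < q" using Sbelow sS by blast
        then show ?thesis by simp
      qed
    qed
    have snf: "s \<notin> f ` prios N" using Sf sS by blast
    have Lm: "Lgood SQ P ms mq N f (subst_atom \<zeta> (fst m))" using IHs em(2) by blast
    obtain Z1 V1 H1 \<eta>1 Qs1 where R1: "sldseg SQ P V H Z1 V1 H1" "sinv P ms mq N f H1 \<eta>1" "finite V1" "vars_pg H1 \<subseteq> V1"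
        "prios H1 = (prios H - {s}) \<union> Qs1" "\<forall>q\<in>Qs1. \<forall>r\<in>prios H - {s}. r < q"
        "\<forall>e y. (e,y) \<in> H \<longrightarrow> y \<noteq> s \<longrightarrow> (\<exists>e'. (e',y) \<in> H1 \<and> subst_atom \<eta>1 e' = subst_atom \<eta> e)"
      using LgoodD[OF Lm I em(1) snf smin em(3) fV vH] by (elim exE conjE) (rule that; assumption)
    define S' where "S' = S - {s}"
    have cS': "card S' = k" unfolding S'_def using cS sS fS by simp
    have fS': "finite S'" unfolding S'_def using fS by simp
    have S'H1: "S' \<subseteq> prios H1" unfolding S'_def R1(5) using SH by auto
    have S'below: "\<forall>s'\<in>S'. \<forall>r\<in>prios H1 - S'. s' < r"
    proof (intro ballI)
      fix s' r assume s': "s' \<in> S'" and r: "r \<in> prios H1 - S'"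
      show "s' < r"
      proof (cases "r \<in> Qs1")
        case True
        have "s' \<in> prios H - {s}" using s' SH unfolding S'_def by auto
        then show ?thesis using R1(6) True by blast
      next
        case False
        then have "r \<in> prios H - S" using r R1(5) unfolding S'_def by auto
        then show ?thesis using Sbelow s' unfolding S'_def by blast
      qed
    qed
    have S'img: "\<forall>s'\<in>S'. \<exists>e m. (e,s') \<in> H1 \<and> m \<in> ms c \<and> subst_atom \<eta>1 e = subst_atom \<zeta> (fst m)"
    proof
      fix s' assume s': "s' \<in> S'"
      then obtain e m where "(e,s') \<in> H" "m \<in> ms c" "subst_atom \<eta> e = subst_atom \<zeta> (fst m)"
        using Simg unfolding S'_def by blast
      moreover have "s' \<noteq> s" using s' unfolding S'_def by auto
      ultimately show "\<exists>e m. (e,s') \<in> H1 \<and> m \<in> ms c \<and> subst_atom \<eta>1 e = subst_atom \<zeta> (fst m)"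
        using R1(7) by metis
    qed
    have S'f: "S' \<inter> f ` prios N = {}" using Sf unfolding S'_def by auto
    obtain Z2 V2 H2 \<eta>2 Qs2 where R2: "sldseg SQ P V1 H1 Z2 V2 H2" "sinv P ms mq N f H2 \<eta>2" "finite V2" "vars_pg H2 \<subseteq> V2"
        "prios H2 = (prios H1 - S') \<union> Qs2" "\<forall>q\<in>Qs2. \<forall>r\<in>prios H1 - S'. r < q"
        "\<forall>e y. (e,y) \<in> H1 \<longrightarrow> y \<notin> S' \<longrightarrow> (\<exists>e'. (e',y) \<in> H2 \<and> subst_atom \<eta>2 e' = subst_atom \<eta>1 e)"
      using Suc.IH[THEN spec[of _ S'], THEN spec[of _ H1], THEN spec[of _ \<eta>1], THEN spec[of _ V1], THEN mp, OF cS', THEN mp, OF fS', THEN mp, OF S'H1, THEN mp, OF S'below, THEN mp, OF S'img, THEN mp, OF R1(2), THEN mp, OF S'f, THEN mp, OF R1(3), THEN mp, OF R1(4)] by (elim exE conjE) (rule that; assumption)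
    have Qs1S': "Qs1 \<inter> S' = {}"
    proof -
      have "S' \<subseteq> prios H - {s}" using SH unfolding S'_def by auto
      then show ?thesis using R1(6) by fastforce
    qed
    have P1: "prios H1 - S' = (prios H - S) \<union> Qs1"
    proof
      show "prios H1 - S' \<subseteq> prios H - S \<union> Qs1" unfolding R1(5) S'_def by blast
      show "prios H - S \<union> Qs1 \<subseteq> prios H1 - S'" unfolding R1(5) using Qs1S' sS unfolding S'_def by blast
    qed
    have P2: "prios H2 = (prios H - S) \<union> (Qs1 \<union> Qs2)"
      unfolding R2(5) P1 by blast
    have sub: "prios H - S \<subseteq> prios H1 - S'" using P1 by blast
    have Ab: "\<forall>q\<in>Qs1 \<union> Qs2. \<forall>r\<in>prios H - S. r < q"
    proof (intro ballI)
      fix q r assume q: "q \<in> Qs1 \<union> Qs2" and r: "r \<in> prios H - S"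
      show "r < q"
      proof (cases "q \<in> Qs1")
        case True then show ?thesis using R1(6) r sS by blast
      next
        case False then show ?thesis using R2(6) q r sub by blast
      qed
    qed
    have Img: "\<forall>e y. (e,y) \<in> H \<longrightarrow> y \<notin> S \<longrightarrow> (\<exists>e'. (e',y) \<in> H2 \<and> subst_atom \<eta>2 e' = subst_atom \<eta> e)"
    proof (intro allI impI)
      fix e y assume ey: "(e,y) \<in> H" "y \<notin> S"
      then obtain e' where "(e',y) \<in> H1" "subst_atom \<eta>1 e' = subst_atom \<eta> e" using R1(7) sS by metis
      moreover have "y \<notin> S'" using ey unfolding S'_def by auto
      ultimately show "\<exists>e'. (e',y) \<in> H2 \<and> subst_atom \<eta>2 e' = subst_atom \<eta> e" using R2(7) by metis
    qed
    show "\<exists>Z V' H' \<eta>'. sldseg SQ P V H Z V' H' \<and> sinv P ms mq N f H' \<eta>' \<and> finite V' \<and> vars_pg H' \<subseteq> V' \<and>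
        (\<exists>Qs. prios H' = (prios H - S) \<union> Qs \<and> (\<forall>q\<in>Qs. \<forall>r\<in>prios H - S. r < q)) \<and>
        (\<forall>e y. (e,y) \<in> H \<longrightarrow> y \<notin> S \<longrightarrow> (\<exists>e'. (e',y) \<in> H' \<and> subst_atom \<eta>' e' = subst_atom \<eta> e))"
      apply (rule exI[of _ "Z1 @ Z2"], rule exI[of _ V2], rule exI[of _ H2], rule exI[of _ \<eta>2])
      using sldseg_trans[OF R1(1) R2(1)] R2(2,3,4) P2 Ab Img by (intro conjI exI[of _ "Qs1 \<union> Qs2"]) assumption+
  qed
qed

lemma prios_KH: "pgoal H \<Longrightarrow> (eo,yo) \<in> H \<Longrightarrow> prios (H - {(eo,yo)}) = prios H - {yo}"
proof
  assume H: "pgoal H" and e: "(eo,yo) \<in> H"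
  show "prios (H - {(eo,yo)}) \<subseteq> prios H - {yo}"
  proof
    fix q assume "q \<in> prios (H - {(eo,yo)})"
    then obtain b where b: "(b,q) \<in> H" "(b,q) \<noteq> (eo,yo)" by (auto elim: prios_memE)
    have "q \<noteq> yo" using pgoal_same[OF H b(1)] e b(2) by auto
    then show "q \<in> prios H - {yo}" using b prios_mem by blast
  qed
  show "prios H - {yo} \<subseteq> prios (H - {(eo,yo)})"
  proof
    fix q assume "q \<in> prios H - {yo}"
    then obtain b where b: "(b,q) \<in> H" "q \<noteq> yo" by (auto elim: prios_memE)
    then show "q \<in> prios (H - {(eo,yo)})" using prios_mem[of b q] by auto
  qed
qed

lemma process_extra:
  assumes inf: "infinite (UNIV :: 'v set)" and cs: "complete_steps SQ" and sp: "sqsplit SQ ms mq"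
    and P: "program P"
  shows "just P ms mq PP A x \<Longrightarrow> PP = shift_pg f N \<longrightarrow> (\<forall>a y. (a,y) \<in> PP \<longrightarrow> x \<le> y) \<longrightarrow>
     Lgood SQ P ms mq N f (A :: ('f,'v) atom)"
proof (induction rule: just.induct)
  case (jprim A y x)
  then show ?case by force
next
  case (junf c A \<zeta> x)
  show ?case
  proof (intro impI)
    assume PPd: "PP = shift_pg f N" and noPP: "\<forall>a y. (a,y) \<in> PP \<longrightarrow> x \<le> y"
    have IHs: "\<forall>m\<in>ms c. Lgood SQ P ms mq N f (subst_atom \<zeta> (fst m))" using junf.IH(1) PPd noPP by blast
    have jst: "\<forall>m\<in>ms c. just P ms mq PP (subst_atom \<zeta> (fst m)) x" using junf.IH(1) by blast
    have jqu: "\<forall>q\<in>mq c. \<exists>x'\<ge>x. just P ms mq PP (subst_atom \<zeta> (fst q)) x'" using junf.IH(2) by blast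
    show "Lgood SQ P ms mq N f A"
      unfolding Lgood_def
    proof (intro allI impI)
      fix H :: "('f,'v) pgoal" and \<eta> V eo yo
      assume I: "sinv P ms mq N f H \<eta>" and eH: "(eo,yo) \<in> H" and ynf: "yo \<notin> f ` prios N"
        and ymin: "\<forall>q\<in>prios H. yo \<le> q" and img: "subst_atom \<eta> eo = A" and fV: "finite V"
        and vH: "vars_pg H \<subseteq> V"
      have H: "pgoal H" and mono: "\<forall>p\<in>prios N. \<forall>q\<in>prios N. p < q \<longrightarrow> f p < f q"
        and prim: "\<forall>a p. (a,p) \<in> N \<longrightarrow> (\<exists>e. (e, f p) \<in> H \<and> subst_atom \<eta> e = a)"
        and ext: "\<forall>e y. (e,y) \<in> H \<longrightarrow> y \<notin> f ` prios N \<longrightarrow> just P ms mq (shift_pg f N) (subst_atom \<eta> e) y"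
        using I unfolding sinv_def by auto
      define KH where "KH = H - {(eo,yo)}"
      have fsH: "first_split H eo yo KH"
        unfolding KH_def using H eH ymin by (intro first_split_exists) (auto simp: pgoal_def)
      have pKH: "prios KH = prios H - {yo}" unfolding KH_def by (rule prios_KH[OF H eH])
      have eq: "subst_atom Var (subst_atom \<eta> eo) = subst_atom \<zeta> (fst c)" using img junf.hyps(2) by simp
      obtain \<xi>' \<theta>' H1 \<delta> \<gamma>' where S: "(H, c, \<xi>', \<theta>', H1) \<in> SQ" "vars_clause (subst_clause \<xi>' c) \<inter> V = {}"
         "finite (vars_clause (subst_clause \<xi>' c))" "shifting \<gamma>'"
         "below (shift_pg \<gamma>' (subst_pg \<xi>' (ms c))) KH" "below KH (shift_pg \<gamma>' (subst_pg \<xi>' (mq c)))"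
         "below (shift_pg \<gamma>' (subst_pg \<xi>' (ms c))) (shift_pg \<gamma>' (subst_pg \<xi>' (mq c)))"
         "H1 = subst_pg \<theta>' (shift_pg \<gamma>' (subst_pg \<xi>' (ms c)) \<union> KH \<union> shift_pg \<gamma>' (subst_pg \<xi>' (mq c)))"
         "\<forall>x\<in>V. subst_trm \<delta> (\<theta>' x) = subst_trm Var (\<eta> x)"
         "\<forall>x\<in>vars_clause c. subst_trm \<delta> (subst_trm \<theta>' (\<xi>' x)) = \<zeta> x"
         "vars_pg H1 \<subseteq> V \<union> vars_clause (subst_clause \<xi>' c)"
         "pgoal (ms c)" "pgoal (mq c)" "snd c = ms c \<union> mq c" "below (ms c) (mq c)"
        using sld_step[OF inf cs sp P junf.hyps(1) H fsH fV vH eq] by (elim exE conjE) (rule that; assumption)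
      define V1 where "V1 = V \<union> vars_clause (subst_clause \<xi>' c)"
      have seg1: "sldseg SQ P V H [c] V1 H1" unfolding V1_def by (rule sldseg_one[OF S(1) junf.hyps(1) S(2)])
      have KHH: "KH \<subseteq> H" unfolding KH_def by auto
      have eV: "vars_atom e1 \<subseteq> V" if "(e1, y) \<in> H" for e1 y using that vH vars_pg_mem by blast
      have imgK: "subst_atom \<delta> (subst_atom \<theta>' e1) = subst_atom \<eta> e1" if "(e1, y) \<in> H" for e1 y
      proof -
        have "subst_atom \<delta> (subst_atom \<theta>' e1) = subst_atom (\<lambda>x. subst_trm Var (\<eta> x)) e1"
          unfolding subst_atom_comp by (rule subst_atom_cong) (use S(9) eV[OF that] in auto)
        then show ?thesis by simp
      qed
      have imgB: "subst_atom \<delta> (subst_atom \<theta>' (subst_atom \<xi>' m)) = subst_atom \<zeta> m" if "(m, s) \<in> snd c" for m s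
        unfolding subst_atom_comp by (rule subst_atom_cong) (use S(10) clause_atom_vars[OF that] in \<open>auto simp: subst_trm_comp[symmetric]\<close>)
      have PPK: "y \<in> prios KH" if ay: "(a,y) \<in> PP" for a y
      proof -
        obtain p where ap: "(a,p) \<in> N" "y = f p" using ay PPd by (auto simp: mem_shift_pg)
        then obtain e1 where "(e1, f p) \<in> H" using prim by blast
        moreover have "f p \<noteq> yo" using ynf ap(1) prios_mem by blast
        ultimately show ?thesis using ap pKH prios_mem by fastforce
      qed
      have pH1: "pgoal H1" unfolding S(8)
        by (rule sq_pgoal[OF S(12,13) pgoal_subset[OF H KHH] S(4,5,6,7)])
      have prim1: "\<forall>a p. (a,p) \<in> N \<longrightarrow> (\<exists>e. (e, f p) \<in> H1 \<and> subst_atom \<delta> e = a)"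
      proof (intro allI impI)
        fix a p assume ap: "(a,p) \<in> N"
        then obtain e1 where e1: "(e1, f p) \<in> H" "subst_atom \<eta> e1 = a" using prim by blast
        have "f p \<noteq> yo" using ynf ap prios_mem by blast
        then have "(e1, f p) \<in> KH" using e1 unfolding KH_def by auto
        then have "(subst_atom \<theta>' e1, f p) \<in> H1" unfolding S(8) sq_mem by blast
        then show "\<exists>e. (e, f p) \<in> H1 \<and> subst_atom \<delta> e = a" using imgK[OF e1(1)] e1(2) by auto
      qed
      have ext1: "\<forall>x1 z. (x1,z) \<in> H1 \<longrightarrow> z \<notin> f ` prios N \<longrightarrow> just P ms mq (shift_pg f N) (subst_atom \<delta> x1) z"
      proof (intro allI impI)
        fix x1 z assume xz: "(x1,z) \<in> H1" "z \<notin> f ` prios N"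
        from xz(1) consider (K) e1 where "(e1,z) \<in> KH" "x1 = subst_atom \<theta>' e1"
          | (CS) m s where "(m,s) \<in> ms c" "z = \<gamma>' s" "x1 = subst_atom \<theta>' (subst_atom \<xi>' m)"
          | (CQ) m s where "(m,s) \<in> mq c" "z = \<gamma>' s" "x1 = subst_atom \<theta>' (subst_atom \<xi>' m)"
          unfolding S(8) sq_mem by blast
        then show "just P ms mq (shift_pg f N) (subst_atom \<delta> x1) z"
        proof cases
          case (K e1)
          then have eH1: "(e1,z) \<in> H" using KHH by auto
          have j: "just P ms mq (shift_pg f N) (subst_atom \<eta> e1) z" using ext eH1 xz(2) by blast
          show ?thesis using j imgK[OF eH1] K(2) by simp
        next
          case (CS m s)
          have "just P ms mq PP (subst_atom \<zeta> m) x" using jst CS(1) by force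
          then have "just P ms mq PP (subst_atom \<zeta> m) z"
            by (rule just_transfer) (use noPP in force)
          moreover have "(m,s) \<in> snd c" using CS S(14) by auto
          ultimately show ?thesis using CS(3) imgB PPd by simp
        next
          case (CQ m s)
          obtain x' where "just P ms mq PP (subst_atom \<zeta> m) x'" using jqu CQ(1) by force
          moreover have "y < z" if ay: "(a,y) \<in> PP" for a y
          proof -
            have "y \<in> prios KH" using PPK ay by blast
            moreover have "z \<in> prios (shift_pg \<gamma>' (subst_pg \<xi>' (mq c)))" using CQ prios_mem by fastforce
            ultimately show ?thesis using below_D[OF S(6)] by blast
          qed
          ultimately have "just P ms mq PP (subst_atom \<zeta> m) z" by (rule just_transfer) blast
          moreover have "(m,s) \<in> snd c" using CQ S(14) by auto
          ultimately show ?thesis using CQ(3) imgB PPd by simp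
        qed
      qed
      have I1: "sinv P ms mq N f H1 \<delta>" unfolding sinv_def using pH1 mono prim1 ext1 by blast
      define S0 where "S0 = \<gamma>' ` prios (ms c)"
      have pH1e: "prios H1 = S0 \<union> prios KH \<union> \<gamma>' ` prios (mq c)" unfolding S(8) S0_def by simp
      have fS0: "finite S0" unfolding S0_def using S(12) by (auto simp: pgoal_def intro: finite_prios)
      have S0H1: "S0 \<subseteq> prios H1" using pH1e by auto
      have S0K: "s \<in> S0 \<Longrightarrow> r \<in> prios KH \<Longrightarrow> s < r" for s r
        using below_D[OF S(5)] unfolding S0_def by simp
      have S0Q: "s \<in> S0 \<Longrightarrow> r \<in> \<gamma>' ` prios (mq c) \<Longrightarrow> s < r" for s r
        using below_D[OF S(7)] unfolding S0_def by simp
      have KQ: "s \<in> prios KH \<Longrightarrow> r \<in> \<gamma>' ` prios (mq c) \<Longrightarrow> s < r" for s r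
        using below_D[OF S(6)] by simp
      have S0below: "\<forall>s\<in>S0. \<forall>r\<in>prios H1 - S0. s < r"
      proof (intro ballI)
        fix s r assume s: "s \<in> S0" and r: "r \<in> prios H1 - S0"
        then have "r \<in> prios KH \<or> r \<in> \<gamma>' ` prios (mq c)" using pH1e by blast
        then show "s < r" using S0K[OF s] S0Q[OF s] by blast
      qed
      have S0img: "\<forall>s\<in>S0. \<exists>e m. (e,s) \<in> H1 \<and> m \<in> ms c \<and> subst_atom \<delta> e = subst_atom \<zeta> (fst m)"
      proof
        fix s assume "s \<in> S0"
        then obtain m s0 where ms: "(m,s0) \<in> ms c" "s = \<gamma>' s0" unfolding S0_def by (auto elim: prios_memE)
        then have "(subst_atom \<theta>' (subst_atom \<xi>' m), s) \<in> H1" unfolding S(8) sq_mem by blast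
        moreover have "(m,s0) \<in> snd c" using ms S(14) by auto
        ultimately show "\<exists>e m. (e,s) \<in> H1 \<and> m \<in> ms c \<and> subst_atom \<delta> e = subst_atom \<zeta> (fst m)"
          using imgB ms(1) by (intro exI[of _ "subst_atom \<theta>' (subst_atom \<xi>' m)"] exI[of _ "(m,s0)"]) auto
      qed
      have fK: "f ` prios N \<subseteq> prios KH"
      proof
        fix y assume "y \<in> f ` prios N"
        then obtain p a where "(a,p) \<in> N" "y = f p" by (auto elim: prios_memE)
        then have "(a, y) \<in> PP" using PPd by (auto simp: mem_shift_pg)
        then show "y \<in> prios KH" by (rule PPK)
      qed
      have S0f: "S0 \<inter> f ` prios N = {}"
      proof (rule ccontr)
        assume "S0 \<inter> f ` prios N \<noteq> {}"
        then obtain y where y: "y \<in> S0" "y \<in> f ` prios N" by blast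
        then have "y < y" using S0K[OF y(1)] fK by blast
        then show False by simp
      qed
      have fV1: "finite V1" unfolding V1_def using fV S(3) by simp
      have vH1: "vars_pg H1 \<subseteq> V1" unfolding V1_def using S(11) .
      obtain Z2 V2 H2 \<eta>2 Qs2 where R2: "sldseg SQ P V1 H1 Z2 V2 H2" "sinv P ms mq N f H2 \<eta>2" "finite V2" "vars_pg H2 \<subseteq> V2"
        "prios H2 = (prios H1 - S0) \<union> Qs2" "\<forall>q\<in>Qs2. \<forall>r\<in>prios H1 - S0. r < q"
        "\<forall>e y. (e,y) \<in> H1 \<longrightarrow> y \<notin> S0 \<longrightarrow> (\<exists>e'. (e',y) \<in> H2 \<and> subst_atom \<eta>2 e' = subst_atom \<delta> e)"
        using stack_process[OF IHs, of "card S0", THEN spec[of _ S0], THEN spec[of _ H1], THEN spec[of _ \<delta>], THEN spec[of _ V1],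
           THEN mp, OF refl, THEN mp, OF fS0, THEN mp, OF S0H1, THEN mp, OF S0below, THEN mp, OF S0img,
           THEN mp, OF I1, THEN mp, OF S0f, THEN mp, OF fV1, THEN mp, OF vH1]
        by (elim exE conjE) (rule that; assumption)
      have dis: "S0 \<inter> prios KH = {}" "S0 \<inter> \<gamma>' ` prios (mq c) = {}"
      proof -
        show "S0 \<inter> prios KH = {}" using S0K by (meson disjoint_iff order_less_irrefl)
        show "S0 \<inter> \<gamma>' ` prios (mq c) = {}" using S0Q by (meson disjoint_iff order_less_irrefl)
      qed
      have PH1S: "prios H1 - S0 = prios KH \<union> \<gamma>' ` prios (mq c)" using pH1e dis by blast
      have P2: "prios H2 = (prios H - {yo}) \<union> (\<gamma>' ` prios (mq c) \<union> Qs2)"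
        unfolding R2(5) PH1S pKH by blast
      have Ab: "\<forall>q\<in>\<gamma>' ` prios (mq c) \<union> Qs2. \<forall>r\<in>prios H - {yo}. r < q"
      proof (intro ballI)
        fix q r assume q: "q \<in> \<gamma>' ` prios (mq c) \<union> Qs2" and r: "r \<in> prios H - {yo}"
        then have rK: "r \<in> prios KH" using pKH by simp
        show "r < q"
        proof (cases "q \<in> Qs2")
          case True
          have "r \<in> prios H1 - S0" using rK PH1S by blast
          then show ?thesis using R2(6) True by blast
        next
          case False
          then show ?thesis using q KQ[OF rK] by blast
        qed
      qed
      have Img: "\<forall>e y. (e,y) \<in> H \<longrightarrow> y \<noteq> yo \<longrightarrow> (\<exists>e'. (e',y) \<in> H2 \<and> subst_atom \<eta>2 e' = subst_atom \<eta> e)"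
      proof (intro allI impI)
        fix e y assume ey: "(e,y) \<in> H" "y \<noteq> yo"
        then have eK: "(e,y) \<in> KH" unfolding KH_def by auto
        then have "(subst_atom \<theta>' e, y) \<in> H1" unfolding S(8) sq_mem by blast
        moreover have "y \<notin> S0" using eK dis prios_mem by blast
        ultimately obtain e' where "(e',y) \<in> H2" "subst_atom \<eta>2 e' = subst_atom \<delta> (subst_atom \<theta>' e)"
          using R2(7) by blast
        then show "\<exists>e'. (e',y) \<in> H2 \<and> subst_atom \<eta>2 e' = subst_atom \<eta> e" using imgK[OF ey(1)] by auto
      qed
      have seg: "sldseg SQ P V H ([c] @ Z2) V2 H2" by (rule sldseg_trans[OF seg1 R2(1)])
      show "\<exists>Z V' H' \<eta>'. sldseg SQ P V H Z V' H' \<and> sinv P ms mq N f H' \<eta>' \<and> finite V' \<and> vars_pg H' \<subseteq> V' \<and>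
        (\<exists>Qs. prios H' = (prios H - {yo}) \<union> Qs \<and> (\<forall>q\<in>Qs. \<forall>r\<in>prios H - {yo}. r < q)) \<and>
        (\<forall>e y. (e,y) \<in> H \<longrightarrow> y \<noteq> yo \<longrightarrow> (\<exists>e'. (e',y) \<in> H' \<and> subst_atom \<eta>' e' = subst_atom \<eta> e))"
        apply (rule exI[of _ "[c] @ Z2"], rule exI[of _ V2], rule exI[of _ H2], rule exI[of _ \<eta>2])
        using seg R2(2,3,4) P2 Ab Img by (intro conjI exI[of _ "\<gamma>' ` prios (mq c) \<union> Qs2"]) assumption+
    qed
  qed
qed

lemma loop:
  assumes inf: "infinite (UNIV :: 'v set)" and cs: "complete_steps SQ" and sp: "sqsplit SQ ms mq"
    and P: "program P" and ap: "(a,p) \<in> N" and pmin: "\<forall>q\<in>prios N. p \<le> q"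
  shows "\<forall>(H :: ('f,'v) pgoal) \<eta> V. card {q \<in> prios H. q < f p} = n \<longrightarrow> sinv P ms mq N f H \<eta> \<longrightarrow>
     finite V \<longrightarrow> vars_pg H \<subseteq> V \<longrightarrow>
     (\<exists>Z V' H' \<eta>'. sldseg SQ P V H Z V' H' \<and> sinv P ms mq N f H' \<eta>' \<and> finite V' \<and> vars_pg H' \<subseteq> V' \<and>
        (\<forall>q\<in>prios H'. f p \<le> q))"
proof (induction n)
  case 0
  show ?case
  proof (intro allI impI)
    fix H :: "('f,'v) pgoal" and \<eta> V
    assume c: "card {q \<in> prios H. q < f p} = 0" and I: "sinv P ms mq N f H \<eta>" and fV: "finite V" and vH: "vars_pg H \<subseteq> V"
    have "finite H" using I unfolding sinv_def pgoal_def by auto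
    then have "finite {q \<in> prios H. q < f p}" using finite_prios[OF \<open>finite H\<close>] by simp
    then have "{q \<in> prios H. q < f p} = {}" using c by simp
    then have "\<forall>q\<in>prios H. f p \<le> q" by force
    then show "\<exists>Z V' H' \<eta>'. sldseg SQ P V H Z V' H' \<and> sinv P ms mq N f H' \<eta>' \<and> finite V' \<and> vars_pg H' \<subseteq> V' \<and>
        (\<forall>q\<in>prios H'. f p \<le> q)"
      using I fV vH by (intro exI[of _ "[]"] exI[of _ V] exI[of _ H] exI[of _ \<eta>]) (auto intro: sldseg.sref)
  qed
next
  case (Suc k)
  show ?case
  proof (intro allI impI)
    fix H :: "('f,'v) pgoal" and \<eta> V
    assume c: "card {q \<in> prios H. q < f p} = Suc k" and I: "sinv P ms mq N f H \<eta>" and fV: "finite V" and vH: "vars_pg H \<subseteq> V"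
    have H: "pgoal H" and mono: "\<forall>p\<in>prios N. \<forall>q\<in>prios N. p < q \<longrightarrow> f p < f q"
        and prim: "\<forall>a p. (a,p) \<in> N \<longrightarrow> (\<exists>e. (e, f p) \<in> H \<and> subst_atom \<eta> e = a)"
        and ext: "\<forall>e y. (e,y) \<in> H \<longrightarrow> y \<notin> f ` prios N \<longrightarrow> just P ms mq (shift_pg f N) (subst_atom \<eta> e) y"
        using I unfolding sinv_def by auto
    have fH: "finite (prios H)" using H unfolding pgoal_def by (auto intro: finite_prios)
    have ne: "{q \<in> prios H. q < f p} \<noteq> {}" using c by (metis card.empty nat.distinct(1))
    then obtain q0 where q0: "q0 \<in> prios H" "q0 < f p" by blast
    define y0 where "y0 = Min (prios H)"
    have y0H: "y0 \<in> prios H" unfolding y0_def using fH q0 by (intro Min_in) auto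
    have y0min: "\<forall>q\<in>prios H. y0 \<le> q" unfolding y0_def using fH by auto
    have y0p: "y0 < f p" using y0min q0 by force
    obtain e0 where e0: "(e0,y0) \<in> H" using y0H by (auto elim: prios_memE)
    have pN: "p \<in> prios N" using ap by (rule prios_mem)
    have y0nf: "y0 \<notin> f ` prios N"
    proof
      assume "y0 \<in> f ` prios N"
      then obtain q where q: "q \<in> prios N" "y0 = f q" by auto
      have "f p \<le> f q" using pmin q mono pN by (cases "p = q") (auto simp: order_le_less)
      then show False using q y0p by simp
    qed
    have j: "just P ms mq (shift_pg f N) (subst_atom \<eta> e0) y0" using ext e0 y0nf by blast
    have noPP: "\<forall>a y. (a,y) \<in> shift_pg f N \<longrightarrow> y0 \<le> y"
    proof (intro allI impI)
      fix a' y assume "(a',y) \<in> shift_pg f N"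
      then obtain q where "(a',q) \<in> N" "y = f q" by (auto simp: mem_shift_pg)
      then obtain e where "(e, y) \<in> H" using prim by blast
      then show "y0 \<le> y" using y0min prios_mem by blast
    qed
    have Lg: "Lgood SQ P ms mq N f (subst_atom \<eta> e0)"
      using process_extra[OF inf cs sp P j] noPP by blast
    obtain Z1 V1 H1 \<eta>1 Qs where R1: "sldseg SQ P V H Z1 V1 H1" "sinv P ms mq N f H1 \<eta>1" "finite V1" "vars_pg H1 \<subseteq> V1"
        "prios H1 = (prios H - {y0}) \<union> Qs" "\<forall>q\<in>Qs. \<forall>r\<in>prios H - {y0}. r < q"
      using LgoodD[OF Lg I e0 y0nf y0min refl fV vH] by (elim exE conjE) (rule that; assumption)
    obtain ep where "(ep, f p) \<in> H" using prim ap by blast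
    then have fpH: "f p \<in> prios H - {y0}" using y0p prios_mem by fastforce
    have "{q \<in> prios H1. q < f p} = {q \<in> prios H. q < f p} - {y0}"
    proof
      show "{q \<in> prios H1. q < f p} \<subseteq> {q \<in> prios H. q < f p} - {y0}"
      proof
        fix q assume q: "q \<in> {q \<in> prios H1. q < f p}"
        have "q \<notin> Qs"
        proof
          assume "q \<in> Qs"
          then have "f p < q" using R1(6) fpH by blast
          then show False using q by simp
        qed
        then show "q \<in> {q \<in> prios H. q < f p} - {y0}" using q R1(5) by auto
      qed
      show "{q \<in> prios H. q < f p} - {y0} \<subseteq> {q \<in> prios H1. q < f p}" using R1(5) by auto
    qed
    moreover have "y0 \<in> {q \<in> prios H. q < f p}" using y0H y0p by simp
    moreover have "finite {q \<in> prios H. q < f p}" using fH by simp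
    ultimately have c1: "card {q \<in> prios H1. q < f p} = k" using c by simp
    obtain Z2 V2 H2 \<eta>2 where R2: "sldseg SQ P V1 H1 Z2 V2 H2" "sinv P ms mq N f H2 \<eta>2" "finite V2" "vars_pg H2 \<subseteq> V2"
        "\<forall>q\<in>prios H2. f p \<le> q"
      using Suc.IH[THEN spec[of _ H1], THEN spec[of _ \<eta>1], THEN spec[of _ V1], THEN mp, OF c1,
         THEN mp, OF R1(2), THEN mp, OF R1(3), THEN mp, OF R1(4)]
      by (elim exE conjE) (rule that; assumption)
    show "\<exists>Z V' H' \<eta>'. sldseg SQ P V H Z V' H' \<and> sinv P ms mq N f H' \<eta>' \<and> finite V' \<and> vars_pg H' \<subseteq> V' \<and>
        (\<forall>q\<in>prios H'. f p \<le> q)"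
      using sldseg_trans[OF R1(1) R2(1)] R2(2-5) by blast
  qed
qed

lemma sinv_card:
  assumes I: "sinv P ms mq Q f H \<eta>"
  shows "card Q \<le> card H"
proof -
  have H: "pgoal H" and mono: "\<forall>p\<in>prios Q. \<forall>q\<in>prios Q. p < q \<longrightarrow> f p < f q"
    and prim: "\<forall>a p. (a,p) \<in> Q \<longrightarrow> (\<exists>e. (e, f p) \<in> H \<and> subst_atom \<eta> e = a)"
    using I unfolding sinv_def by auto
  define g where "g ap = (SOME e. (e, f (snd ap)) \<in> H \<and> subst_atom \<eta> e = fst ap, f (snd ap))" for ap
  have gH: "g ap \<in> H \<and> subst_atom \<eta> (fst (g ap)) = fst ap" if "ap \<in> Q" for ap
  proof -
    obtain a p where ap: "ap = (a,p)" by fastforce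
    have "\<exists>e. (e, f p) \<in> H \<and> subst_atom \<eta> e = a" using prim that ap by blast
    from someI_ex[OF this] show ?thesis unfolding g_def ap by simp
  qed
  have inj: "inj_on g Q"
  proof
    fix x y assume x: "x \<in> Q" and y: "y \<in> Q" and gxy: "g x = g y"
    have fs: "f (snd x) = f (snd y)" using gxy unfolding g_def by simp
    have "snd x = snd y"
    proof (rule ccontr)
      assume "snd x \<noteq> snd y"
      then have "snd x < snd y \<or> snd y < snd x" by auto
      moreover have "snd x \<in> prios Q" "snd y \<in> prios Q" using x y prios_mem[of "fst x" "snd x"] prios_mem[of "fst y" "snd y"] by auto
      ultimately show False using mono fs by fastforce
    qed
    moreover have "fst x = fst y" using gH[OF x] gH[OF y] gxy by metis
    ultimately show "x = y" by (simp add: prod_eq_iff)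
  qed
  have "g ` Q \<subseteq> H" using gH by blast
  moreover have "finite H" using H unfolding pgoal_def by auto
  ultimately show ?thesis using card_inj_on_le[OF inj] by blast
qed

lemma sldseg_deriv:
  assumes cs: "complete_steps SQ"
  shows "sldseg SQ P V H Z V' H' \<Longrightarrow> \<exists>(m::nat) G cs \<xi>s \<theta>s. G 0 = H \<and> G m = H' \<and> Z = map cs [0..<m] \<and>
        (\<forall>j<m. cs j \<in> P \<and> is_step (G j, cs j, \<xi>s j, \<theta>s j, G (Suc j)) \<and>
               (G j, cs j, \<xi>s j, \<theta>s j, G (Suc j)) \<in> SQ \<and>
               vars_clause (subst_clause (\<xi>s j) (cs j)) \<inter>
                 (V \<union> (\<Union>i<j. vars_clause (subst_clause (\<xi>s i) (cs i)))) = {})"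
proof (induction rule: sldseg.induct)
  case (sref V H)
  show ?case by (intro exI[of _ 0]) auto
next
  case (sstep H c \<xi> \<theta> H1 V Z V' H')
  obtain m G cs' \<xi>s \<theta>s where R: "G 0 = H1" "G m = H'" "Z = map cs' [0..<m]"
    "\<forall>j<m. cs' j \<in> P \<and> is_step (G j, cs' j, \<xi>s j, \<theta>s j, G (Suc j)) \<and>
               (G j, cs' j, \<xi>s j, \<theta>s j, G (Suc j)) \<in> SQ \<and>
               vars_clause (subst_clause (\<xi>s j) (cs' j)) \<inter>
                 ((V \<union> vars_clause (subst_clause \<xi> c)) \<union> (\<Union>i<j. vars_clause (subst_clause (\<xi>s i) (cs' i)))) = {}"
    using sstep.IH by (elim exE conjE) (rule that; assumption)
  define G' where "G' j = (if j = 0 then H else G (j - 1))" for j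
  define cs'' where "cs'' j = (if j = 0 then c else cs' (j - 1))" for j
  define \<xi>s' where "\<xi>s' j = (if j = 0 then \<xi> else \<xi>s (j - 1))" for j
  define \<theta>s' where "\<theta>s' j = (if j = 0 then \<theta> else \<theta>s (j - 1))" for j
  have Zeq: "c # Z = map cs'' [0..<Suc m]"
  proof (rule nth_equalityI)
    show "length (c # Z) = length (map cs'' [0..<Suc m])" using R(3) by simp
    fix i assume i: "i < length (c # Z)"
    then have im: "i < Suc m" using R(3) by simp
    have "map cs'' [0..<Suc m] ! i = cs'' i" using im by (simp del: upt_Suc)
    moreover have "(c # Z) ! i = cs'' i"
    proof (cases i)
      case 0 then show ?thesis unfolding cs''_def by simp
    next
      case (Suc i')
      then have "i' < m" using im by simp
      then show ?thesis using R(3) Suc unfolding cs''_def by simp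
    qed
    ultimately show "(c # Z) ! i = map cs'' [0..<Suc m] ! i" by simp
  qed
  have UN: "(\<Union>i<Suc j. vars_clause (subst_clause (\<xi>s' i) (cs'' i))) =
     vars_clause (subst_clause \<xi> c) \<union> (\<Union>i<j. vars_clause (subst_clause (\<xi>s i) (cs' i)))" for j
    unfolding lessThan_Suc_eq_insert_0 by (auto simp: \<xi>s'_def cs''_def)
  have step0: "is_step (H, c, \<xi>, \<theta>, H1)" using cs sstep.hyps(1) unfolding complete_steps_def by blast
  have "\<forall>j<Suc m. cs'' j \<in> P \<and> is_step (G' j, cs'' j, \<xi>s' j, \<theta>s' j, G' (Suc j)) \<and>
               (G' j, cs'' j, \<xi>s' j, \<theta>s' j, G' (Suc j)) \<in> SQ \<and>
               vars_clause (subst_clause (\<xi>s' j) (cs'' j)) \<inter>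
                 (V \<union> (\<Union>i<j. vars_clause (subst_clause (\<xi>s' i) (cs'' i)))) = {}"
  proof (intro allI impI)
    fix j assume j: "j < Suc m"
    show "cs'' j \<in> P \<and> is_step (G' j, cs'' j, \<xi>s' j, \<theta>s' j, G' (Suc j)) \<and>
               (G' j, cs'' j, \<xi>s' j, \<theta>s' j, G' (Suc j)) \<in> SQ \<and>
               vars_clause (subst_clause (\<xi>s' j) (cs'' j)) \<inter>
                 (V \<union> (\<Union>i<j. vars_clause (subst_clause (\<xi>s' i) (cs'' i)))) = {}"
    proof (cases j)
      case 0
      then show ?thesis using sstep.hyps(1,2,3) step0 R(1) unfolding G'_def cs''_def \<xi>s'_def \<theta>s'_def by auto
    next
      case (Suc j')
      then have j': "j' < m" using j by simp
      have r4: "cs' j' \<in> P \<and> is_step (G j', cs' j', \<xi>s j', \<theta>s j', G (Suc j')) \<and>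
               (G j', cs' j', \<xi>s j', \<theta>s j', G (Suc j')) \<in> SQ \<and>
               vars_clause (subst_clause (\<xi>s j') (cs' j')) \<inter>
                 ((V \<union> vars_clause (subst_clause \<xi> c)) \<union> (\<Union>i<j'. vars_clause (subst_clause (\<xi>s i) (cs' i)))) = {}"
        using R(4) j' by blast
      have e1: "G' j = G j'" "G' (Suc j) = G (Suc j')" "cs'' j = cs' j'" "\<xi>s' j = \<xi>s j'" "\<theta>s' j = \<theta>s j'"
        unfolding G'_def cs''_def \<xi>s'_def \<theta>s'_def Suc by auto
      have "vars_clause (subst_clause (\<xi>s' j) (cs'' j)) \<inter>
                 (V \<union> (\<Union>i<j. vars_clause (subst_clause (\<xi>s' i) (cs'' i)))) = {}"
        using r4 unfolding Suc UN e1[unfolded Suc] by (simp add: Un_assoc)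
      then show ?thesis using r4 unfolding e1 by simp
    qed
  qed
  moreover have "G' 0 = H" "G' (Suc m) = H'" using R(2) unfolding G'_def by auto
  ultimately show ?case using Zeq
    by (intro exI[of _ "Suc m"] exI[of _ G'] exI[of _ cs''] exI[of _ \<xi>s'] exI[of _ \<theta>s'] conjI) simp_all
qed

theorem lemmaL5p1p1:
  fixes P :: "('f,'v) clause set" and SQ :: "('f,'v) step set"
    and G Q :: "('f,'v) pgoal" and X :: "('f,'v) clause list"
  assumes "infinite (UNIV :: 'v set)"
    and "program P"
    and "stack_queue SQ"
    and "pgoal G"
    and "rsld_deriv SQ P G X Q"
  shows "\<exists>Z R. sld_deriv SQ P G Z R \<and> subseq X Z \<and> card Q \<le> card R"
proof -
  note inf = assms(1) and Pp = assms(2)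
  obtain ms mq where sp: "sqsplit SQ ms mq" using sqsplit_exists[OF assms(3)] by blast
  have cs: "complete_steps SQ" using assms(3) unfolding stack_queue_def by blast
  obtain n Gs Ns \<alpha> cls \<xi>s \<theta>s where R: "Gs 0 = G" "Ns n = Q" "X = map cls [0..<n]"
     "\<forall>j\<le>n. reduced (vars_pg (apply_substs G (map \<theta>s [0..<j]))) (\<alpha> j) (Gs j) (Ns j)"
     "\<forall>j<n. cls j \<in> P \<and> is_step (Ns j, cls j, \<xi>s j, \<theta>s j, Gs (Suc j)) \<and>
               (Ns j, cls j, \<xi>s j, \<theta>s j, Gs (Suc j)) \<in> SQ \<and>
               vars_clause (subst_clause (\<xi>s j) (cls j)) \<inter>
                 (vars_pg G \<union> (\<Union>i<j. vars_clause (subst_clause (\<xi>s i) (cls i)))) = {}"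
    using assms(5) unfolding rsld_deriv_def by (elim exE conjE) (rule that; assumption)
  have fG: "finite (vars_pg G)" using assms(4) unfolding pgoal_def by (auto intro: finite_vars_pg)
  have claim: "j \<le> n \<longrightarrow> (\<exists>Z V H \<eta> f. sldseg SQ P (vars_pg G) G Z V H \<and> subseq (map cls [0..<j]) Z \<and>
      sinv P ms mq (Ns j) f H \<eta> \<and> finite V \<and> vars_pg H \<subseteq> V)" for j
  proof (induction j)
    case 0
    show ?case
    proof
      have I0: "sinv P ms mq G id G Var"
        unfolding sinv_def using assms(4) by (auto dest: prios_mem)
      have red0: "reduced (vars_pg (apply_substs G (map \<theta>s [0..<0]))) (\<alpha> 0) (Gs 0) (Ns 0)" using R(4) by blast
      have "sinv P ms mq (Ns 0) id G (\<lambda>x. subst_trm (\<alpha> 0) (Var x))"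
        using sinv_reduce[OF I0 red0[unfolded R(1)]] .
      then show "\<exists>Z V H \<eta> f. sldseg SQ P (vars_pg G) G Z V H \<and> subseq (map cls [0..<0]) Z \<and>
          sinv P ms mq (Ns 0) f H \<eta> \<and> finite V \<and> vars_pg H \<subseteq> V"
        using fG by (intro exI[of _ "[]"] exI[of _ "vars_pg G"] exI[of _ G]) (auto intro: sldseg.sref)
    qed
  next
    case (Suc j)
    show ?case
    proof
      assume jn: "Suc j \<le> n"
      then obtain Z V H \<eta> f where IH: "sldseg SQ P (vars_pg G) G Z V H" "subseq (map cls [0..<j]) Z"
          "sinv P ms mq (Ns j) f H \<eta>" "finite V" "vars_pg H \<subseteq> V"
        using Suc.IH by (auto)
      have st: "cls j \<in> P" "is_step (Ns j, cls j, \<xi>s j, \<theta>s j, Gs (Suc j))"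
           "(Ns j, cls j, \<xi>s j, \<theta>s j, Gs (Suc j)) \<in> SQ"
        using R(5) jn by auto
      obtain \<pi> where "pstep (Ns j) (cls j) (\<xi>s j) (\<theta>s j) \<pi> (Gs (Suc j))" using st(2) by auto
      then obtain a p K where fs: "first_split (Ns j) a p K" unfolding pstep_def by blast
      have ap: "(a,p) \<in> Ns j" using fs unfolding first_split_def by auto
      have pmin: "\<forall>q\<in>prios (Ns j). p \<le> q" using fs unfolding first_split_def by force
      obtain Z1 V1 H1 \<eta>1 where L: "sldseg SQ P V H Z1 V1 H1" "sinv P ms mq (Ns j) f H1 \<eta>1" "finite V1" "vars_pg H1 \<subseteq> V1"
          "\<forall>q\<in>prios H1. f p \<le> q"
        using loop[OF inf cs sp Pp ap pmin, of f "card {q \<in> prios H. q < f p}", THEN spec[of _ H], THEN spec[of _ \<eta>],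
              THEN spec[of _ V], THEN mp, OF refl, THEN mp, OF IH(3), THEN mp, OF IH(4), THEN mp, OF IH(5)]
        by (elim exE conjE) (rule that; assumption)
      obtain \<xi>' \<theta>' H2 \<eta>2 f2 where T: "(H1, cls j, \<xi>', \<theta>', H2) \<in> SQ" "vars_clause (subst_clause \<xi>' (cls j)) \<inter> V1 = {}"
          "finite (vars_clause (subst_clause \<xi>' (cls j)))" "vars_pg H2 \<subseteq> V1 \<union> vars_clause (subst_clause \<xi>' (cls j))"
          "sinv P ms mq (Gs (Suc j)) f2 H2 \<eta>2"
        using tstep[OF inf cs sp Pp st(1) L(2) fs L(5) st(3) L(3,4)] by (elim exE conjE) (rule that; assumption)
      have red: "reduced (vars_pg (apply_substs G (map \<theta>s [0..<Suc j]))) (\<alpha> (Suc j)) (Gs (Suc j)) (Ns (Suc j))"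
        using R(4) jn by blast
      have I2: "sinv P ms mq (Ns (Suc j)) f2 H2 (\<lambda>x. subst_trm (\<alpha> (Suc j)) (\<eta>2 x))"
        by (rule sinv_reduce[OF T(5) red])
      have seg: "sldseg SQ P (vars_pg G) G (Z @ Z1 @ [cls j]) (V1 \<union> vars_clause (subst_clause \<xi>' (cls j))) H2"
        using sldseg_trans[OF IH(1) sldseg_trans[OF L(1) sldseg_one[OF T(1) st(1) T(2)]]] .
      have sub: "subseq (map cls [0..<Suc j]) (Z @ Z1 @ [cls j])"
      proof -
        have "subseq (map cls [0..<j] @ []) (Z @ Z1)" by (rule list_emb_append_mono[OF IH(2)]) simp
        then have "subseq (map cls [0..<j] @ [cls j]) ((Z @ Z1) @ [cls j])" by (simp only: subseq_append append_Nil2)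
        then show ?thesis by simp
      qed
      have fV2: "finite (V1 \<union> vars_clause (subst_clause \<xi>' (cls j)))" using L(3) T(3) by simp
      show "\<exists>Z V H \<eta> f. sldseg SQ P (vars_pg G) G Z V H \<and> subseq (map cls [0..<Suc j]) Z \<and>
          sinv P ms mq (Ns (Suc j)) f H \<eta> \<and> finite V \<and> vars_pg H \<subseteq> V"
        using seg sub I2 fV2 T(4) by blast
    qed
  qed
  obtain Z V H \<eta> f where F: "sldseg SQ P (vars_pg G) G Z V H" "subseq (map cls [0..<n]) Z"
      "sinv P ms mq (Ns n) f H \<eta>"
    using claim[of n] by blast
  have "sld_deriv SQ P G Z H"
    unfolding sld_deriv_def using sldseg_deriv[OF cs F(1)] by blast
  moreover have "card Q \<le> card H" using sinv_card[OF F(3)] R(2) by simp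
  ultimately show ?thesis using F(2) R(3) by blast
qed

end
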